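(* Let $(V,q)$ be a quadratic space over $F$ of dimension $2n+1$ with Witt index $n$, and let $a\in\mathcal{O}\smallsetminus\{0\}$ with $\mathrm{val}_\mathfrak{p}(a)\in\{0,1\}$. Let $L_1$ and $L_2$ be two lattices of type $a$ in $(V,q)$. Let $W$ be a totally isotropic subspace of $V$ and $\{0\}\subset W_1\subset\cdots\subset W_n=W$ a complete flag of $W$. Then there exists $g\in\mathrm{SO}(V,q)$ such that $g(L_1)=L_2$ and $g(W_i)=W_i$ for all $i\in\{1,\dots,n\}$.
   Context: $F$ is a non-archimedean local field of characteristic $0$ with ring of integers $\mathcal{O}$ and maximal ideal $\mathfrak{p}$; $\langle x,y\rangle=q(x+y)-q(x)-q(y)$ is the bilinear form of $q$. A lattice $L$ of $V$ is of type $a$ if it has an $\mathcal{O}$-basis $(e_1,\dots,e_n,v_0,f_n,\dots,f_1)$ with $\langle e_i,e_j\rangle=\langle e_i,v_0\rangle=\langle f_i,f_j\rangle=\langle f_i,v_0\rangle=0$, $\langle e_i,f_j\rangle=\delta_{ij}$, $\langle v_0,v_0\rangle=2a$. *)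

theory Defs
  imports "Jordan_Normal_Form.Determinant"
begin

(* v is a normalized discrete valuation: v x is meaningful only for x \<noteq> 0 *)
definition discrete_valuation :: "('a::field \<Rightarrow> int) \<Rightarrow> bool" where
  "discrete_valuation v \<longleftrightarrow>
     (\<forall>x y. x \<noteq> 0 \<longrightarrow> y \<noteq> 0 \<longrightarrow> v (x * y) = v x + v y) \<and>
     (\<forall>x y. x \<noteq> 0 \<longrightarrow> y \<noteq> 0 \<longrightarrow> x + y \<noteq> 0 \<longrightarrow> v (x + y) \<ge> min (v x) (v y)) \<and>
     (\<forall>k. \<exists>x. x \<noteq> 0 \<and> v x = k)"

(* "x - y has valuation at least k", with v(0) = +infinity *)
definition val_close :: "('a::field \<Rightarrow> int) \<Rightarrow> int \<Rightarrow> 'a \<Rightarrow> 'a \<Rightarrow> bool" where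
  "val_close v k x y \<longleftrightarrow> x = y \<or> v (x - y) \<ge> k"

definition val_ring :: "('a::field \<Rightarrow> int) \<Rightarrow> 'a set" where
  "val_ring v = {x. x = 0 \<or> v x \<ge> 0}"

definition val_ideal :: "('a::field \<Rightarrow> int) \<Rightarrow> 'a set" where
  "val_ideal v = {x. x = 0 \<or> v x \<ge> 1}"

definition nonarch_local_field :: "('a::field_char_0 \<Rightarrow> int) \<Rightarrow> bool" where
  "nonarch_local_field v \<longleftrightarrow>
     discrete_valuation v \<and>
     (\<forall>s :: nat \<Rightarrow> 'a. (\<forall>k. \<exists>M. \<forall>m\<ge>M. \<forall>m'\<ge>M. val_close v k (s m) (s m')) \<longrightarrow>
        (\<exists>l. \<forall>k. \<exists>M. \<forall>m\<ge>M. val_close v k (s m) l)) \<and>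
     (\<exists>R. finite R \<and> R \<subseteq> val_ring v \<and> (\<forall>x\<in>val_ring v. \<exists>r\<in>R. x - r \<in> val_ideal v))"

definition lin_indep :: "nat \<Rightarrow> 'a::field vec list \<Rightarrow> bool" where
  "lin_indep N bs \<longleftrightarrow> (\<forall>c \<in> carrier_vec (length bs).
      mat_of_cols N bs *\<^sub>v c = 0\<^sub>v N \<longrightarrow> c = 0\<^sub>v (length bs))"

definition fspan :: "nat \<Rightarrow> 'a::field vec list \<Rightarrow> 'a vec set" where
  "fspan N bs = {mat_of_cols N bs *\<^sub>v c | c. c \<in> carrier_vec (length bs)}"

definition rspan :: "'a set \<Rightarrow> nat \<Rightarrow> 'a::field vec list \<Rightarrow> 'a vec set" where
  "rspan Rg N bs = {mat_of_cols N bs *\<^sub>v c | c. c \<in> carrier_vec (length bs) \<and> (\<forall>i < length bs. c $ i \<in> Rg)}"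

definition is_subspace :: "nat \<Rightarrow> 'a::field vec set \<Rightarrow> bool" where
  "is_subspace N S \<longleftrightarrow> S \<subseteq> carrier_vec N \<and> 0\<^sub>v N \<in> S \<and>
     (\<forall>x\<in>S. \<forall>y\<in>S. x + y \<in> S) \<and> (\<forall>c. \<forall>x\<in>S. c \<cdot>\<^sub>v x \<in> S)"

definition subspace_dim :: "nat \<Rightarrow> 'a::field vec set \<Rightarrow> nat \<Rightarrow> bool" where
  "subspace_dim N S k \<longleftrightarrow> is_subspace N S \<and>
     (\<exists>bs. length bs = k \<and> set bs \<subseteq> carrier_vec N \<and> lin_indep N bs \<and> S = fspan N bs)"

definition bil :: "('a::field vec \<Rightarrow> 'a) \<Rightarrow> 'a vec \<Rightarrow> 'a vec \<Rightarrow> 'a" where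
  "bil q x y = q (x + y) - q x - q y"

definition quadratic_form :: "nat \<Rightarrow> ('a::field vec \<Rightarrow> 'a) \<Rightarrow> bool" where
  "quadratic_form N q \<longleftrightarrow>
     (\<forall>c. \<forall>x\<in>carrier_vec N. q (c \<cdot>\<^sub>v x) = c^2 * q x) \<and>
     (\<forall>x\<in>carrier_vec N. \<forall>y\<in>carrier_vec N. \<forall>z\<in>carrier_vec N.
         bil q (x + y) z = bil q x z + bil q y z) \<and>
     (\<forall>c. \<forall>x\<in>carrier_vec N. \<forall>z\<in>carrier_vec N. bil q (c \<cdot>\<^sub>v x) z = c * bil q x z)"

definition nondegenerate :: "nat \<Rightarrow> ('a::field vec \<Rightarrow> 'a) \<Rightarrow> bool" where
  "nondegenerate N q \<longleftrightarrow>
     (\<forall>x\<in>carrier_vec N. (\<forall>y\<in>carrier_vec N. bil q x y = 0) \<longrightarrow> x = 0\<^sub>v N)"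

definition quadratic_space :: "nat \<Rightarrow> ('a::field vec \<Rightarrow> 'a) \<Rightarrow> bool" where
  "quadratic_space N q \<longleftrightarrow> quadratic_form N q \<and> nondegenerate N q"

definition totally_isotropic :: "nat \<Rightarrow> ('a::field vec \<Rightarrow> 'a) \<Rightarrow> 'a vec set \<Rightarrow> bool" where
  "totally_isotropic N q W \<longleftrightarrow> is_subspace N W \<and> (\<forall>x\<in>W. q x = 0)"

definition witt_index :: "nat \<Rightarrow> ('a::field vec \<Rightarrow> 'a) \<Rightarrow> nat \<Rightarrow> bool" where
  "witt_index N q m \<longleftrightarrow>
     (\<exists>W. totally_isotropic N q W \<and> subspace_dim N W m) \<and>
     (\<forall>W k. totally_isotropic N q W \<longrightarrow> subspace_dim N W k \<longrightarrow> k \<le> m)"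

(* L is a lattice of type a: it has an O-basis (e_1..e_n, v_0, f_n..f_1) of V with the
   prescribed Gram matrix.  Indices e_1..e_n are e 0 .. e (n-1). *)
definition lattice_of_type ::
  "('a::field \<Rightarrow> int) \<Rightarrow> nat \<Rightarrow> ('a vec \<Rightarrow> 'a) \<Rightarrow> nat \<Rightarrow> 'a \<Rightarrow> 'a vec set \<Rightarrow> bool" where
  "lattice_of_type v N q n a L \<longleftrightarrow>
     (\<exists>e f v0. (\<forall>i<n. e i \<in> carrier_vec N \<and> f i \<in> carrier_vec N) \<and> v0 \<in> carrier_vec N \<and>
        (\<forall>i<n. \<forall>j<n. bil q (e i) (e j) = 0 \<and> bil q (f i) (f j) = 0 \<and>
                     bil q (e i) (f j) = (if i = j then 1 else 0)) \<and>
        (\<forall>i<n. bil q (e i) v0 = 0 \<and> bil q (f i) v0 = 0) \<and>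
        bil q v0 v0 = 2 * a \<and>
        (let bs = map e [0..<n] @ [v0] @ rev (map f [0..<n]) in
           lin_indep N bs \<and> fspan N bs = carrier_vec N \<and> L = rspan (val_ring v) N bs))"

definition SO_group :: "nat \<Rightarrow> ('a::field vec \<Rightarrow> 'a) \<Rightarrow> 'a mat set" where
  "SO_group N q = {G \<in> carrier_mat N N. det G = 1 \<and> (\<forall>x\<in>carrier_vec N. q (G *\<^sub>v x) = q x)}"

end

theory Submission
  imports Defs
begin


lemma dv_mult: "discrete_valuation v \<Longrightarrow> x \<noteq> 0 \<Longrightarrow> y \<noteq> 0 \<Longrightarrow> v (x*y) = v x + v y"
  unfolding discrete_valuation_def by blast
lemma dv_add: "discrete_valuation v \<Longrightarrow> x \<noteq> 0 \<Longrightarrow> y \<noteq> 0 \<Longrightarrow> x + y \<noteq> 0 \<Longrightarrow> v (x+y) \<ge> min (v x) (v y)"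
  unfolding discrete_valuation_def by blast

locale qsetup =
  fixes v :: "'a::field_char_0 \<Rightarrow> int" and q :: "'a vec \<Rightarrow> 'a" and n :: nat and a :: 'a
  assumes dv: "discrete_valuation v" and qf: "quadratic_form (2*n+1) q"
    and a_nz: "a \<noteq> 0" and aO: "a \<in> val_ring v"
begin

abbreviation "Ov \<equiv> val_ring v"

lemma v1: "v 1 = 0"
  using dv_mult[OF dv, of 1 1] by simp

lemma vm1: "v (-1) = 0"
  using dv_mult[OF dv, of "-1" "-1"] v1 by simp

lemma vneg: "x \<noteq> 0 \<Longrightarrow> v (-x) = v x"
  using dv_mult[OF dv, of "-1" x] vm1 by simp

lemma vinv: "x \<noteq> 0 \<Longrightarrow> v (inverse x) = - v x"
  using dv_mult[OF dv, of x "inverse x"] v1 by simp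

lemma vdiv: "x \<noteq> 0 \<Longrightarrow> y \<noteq> 0 \<Longrightarrow> v (x / y) = v x - v y"
  using dv_mult[OF dv, of x "inverse y"] vinv[of y] by (simp add: divide_inverse)

lemma O0[simp]: "0 \<in> Ov" and O1[simp]: "1 \<in> Ov"
  unfolding val_ring_def using v1 by auto

lemma Oadd: assumes "x \<in> Ov" "y \<in> Ov" shows "x + y \<in> Ov"
proof (cases "x = 0 \<or> y = 0 \<or> x + y = 0")
  case True then show ?thesis using assms by (auto simp: val_ring_def)
next
  case False
  then have "v x \<ge> 0" "v y \<ge> 0" using assms by (auto simp: val_ring_def)
  with dv_add[OF dv, of x y] False show ?thesis by (auto simp: val_ring_def)
qed


lemma Omult: "x \<in> Ov \<Longrightarrow> y \<in> Ov \<Longrightarrow> x * y \<in> Ov"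
  unfolding val_ring_def using dv_mult[OF dv, of x y] by (cases "x = 0"; cases "y = 0") auto

lemma Oneg: "x \<in> Ov \<Longrightarrow> - x \<in> Ov"
  unfolding val_ring_def using vneg[of x] by (cases "x = 0") auto

lemma Odiff: assumes "x \<in> Ov" "y \<in> Ov" shows "x - y \<in> Ov"
proof -
  have "x + - y \<in> Ov" by (rule Oadd[OF assms(1) Oneg[OF assms(2)]])
  then show ?thesis by simp
qed


lemma O2: "2 \<in> Ov"
proof -
  have "1 + 1 \<in> Ov" by (rule Oadd[OF O1 O1])
  then show ?thesis by simp
qed


lemma Osum: "(\<And>i. i \<in> S \<Longrightarrow> f i \<in> Ov) \<Longrightarrow> sum f S \<in> Ov"
  by (induction S rule: infinite_finite_induct) (auto intro: Oadd)

lemma Ounit_div: "y \<in> Ov \<Longrightarrow> x \<noteq> 0 \<Longrightarrow> v x = 0 \<Longrightarrow> y / x \<in> Ov"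
  unfolding val_ring_def by (cases "y = 0") (auto simp: vdiv)

lemma Odiv_le: "x \<noteq> 0 \<Longrightarrow> (y = 0 \<or> v x \<le> v y) \<Longrightarrow> y / x \<in> Ov"
  unfolding val_ring_def by (cases "y = 0") (auto simp: vdiv)

definition "P2 = {x. x = 0 \<or> v x \<ge> 2}"

lemma P2add: assumes "x \<in> P2" "y \<in> P2" shows "x + y \<in> P2"
proof (cases "x = 0 \<or> y = 0 \<or> x + y = 0")
  case True then show ?thesis using assms by (auto simp: P2_def)
next
  case False
  then have "v x \<ge> 2" "v y \<ge> 2" using assms by (auto simp: P2_def)
  with dv_add[OF dv, of x y] False show ?thesis by (auto simp: P2_def)
qed


lemma P2_0[simp]: "0 \<in> P2" unfolding P2_def by simp

lemma P2sum: "(\<And>i. i \<in> S \<Longrightarrow> f i \<in> P2) \<Longrightarrow> sum f S \<in> P2"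
  by (induction S rule: infinite_finite_induct) (auto intro: P2add)

lemma P2neg: "x \<in> P2 \<Longrightarrow> - x \<in> P2"
  unfolding P2_def using vneg[of x] by (cases "x = 0") auto

lemma P2mult: "x \<in> val_ideal v \<Longrightarrow> y \<in> val_ideal v \<Longrightarrow> x * y \<in> P2"
  unfolding P2_def val_ideal_def using dv_mult[OF dv, of x y] by (cases "x = 0"; cases "y = 0") auto

end


context qsetup begin

definition "N = 2*n+1"

lemma qf_smult: "x \<in> carrier_vec N \<Longrightarrow> q (c \<cdot>\<^sub>v x) = c^2 * q x"
  using qf unfolding quadratic_form_def N_def by blast
lemma bil_add_l: "x \<in> carrier_vec N \<Longrightarrow> y \<in> carrier_vec N \<Longrightarrow> z \<in> carrier_vec N \<Longrightarrow>
   bil q (x + y) z = bil q x z + bil q y z"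
  using qf unfolding quadratic_form_def N_def by blast
lemma bil_smult_l: "x \<in> carrier_vec N \<Longrightarrow> z \<in> carrier_vec N \<Longrightarrow> bil q (c \<cdot>\<^sub>v x) z = c * bil q x z"
  using qf unfolding quadratic_form_def N_def by blast

lemma bil_sym: assumes "x \<in> carrier_vec N" "y \<in> carrier_vec N" shows "bil q x y = bil q y x"
proof -
  have "x + y = y + x" by (rule comm_add_vec[OF assms])
  then show ?thesis unfolding bil_def by simp
qed

lemma bil_add_r: assumes "x \<in> carrier_vec N" "y \<in> carrier_vec N" "z \<in> carrier_vec N"
  shows "bil q z (x + y) = bil q z x + bil q z y"
proof -
  have "bil q z (x + y) = bil q (x + y) z" by (rule bil_sym) (use assms in auto)
  also have "\<dots> = bil q x z + bil q y z" by (rule bil_add_l[OF assms])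
  also have "bil q x z = bil q z x" by (rule bil_sym[OF assms(1,3)])
  also have "bil q y z = bil q z y" by (rule bil_sym[OF assms(2,3)])
  finally show ?thesis .
qed

lemma bil_smult_r: assumes "x \<in> carrier_vec N" "z \<in> carrier_vec N" shows "bil q z (c \<cdot>\<^sub>v x) = c * bil q z x"
proof -
  have "bil q z (c \<cdot>\<^sub>v x) = bil q (c \<cdot>\<^sub>v x) z" by (rule bil_sym) (use assms in auto)
  also have "\<dots> = c * bil q x z" by (rule bil_smult_l[OF assms])
  also have "bil q x z = bil q z x" by (rule bil_sym[OF assms])
  finally show ?thesis .
qed

lemma zero_smult0: "0 \<cdot>\<^sub>v (0\<^sub>v N) = (0\<^sub>v N :: 'a vec)"
  by (rule eq_vecI) auto

lemma bil_zero_l: assumes "z \<in> carrier_vec N" shows "bil q (0\<^sub>v N) z = 0"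
proof -
  have "bil q (0 \<cdot>\<^sub>v (0\<^sub>v N)) z = 0 * bil q (0\<^sub>v N) z" by (rule bil_smult_l) (use assms in auto)
  then show ?thesis unfolding zero_smult0 by simp
qed

lemma bil_zero_r: assumes "z \<in> carrier_vec N" shows "bil q z (0\<^sub>v N) = 0"
proof -
  have "bil q z (0\<^sub>v N) = bil q (0\<^sub>v N) z" by (rule bil_sym) (use assms in auto)
  then show ?thesis using bil_zero_l[OF assms] by simp
qed

lemma bil_self: assumes "x \<in> carrier_vec N" shows "bil q x x = 2 * q x"
proof -
  have e: "x + x = 2 \<cdot>\<^sub>v x"
  proof (rule eq_vecI)
    fix i assume "i < dim_vec (2 \<cdot>\<^sub>v x)"
    then have i: "i < dim_vec x" by simp
    have "(x + x) $ i = x $ i + x $ i" using i by simp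
    also have "\<dots> = 2 * x $ i" by (rule mult_2[symmetric])
    also have "\<dots> = (2 \<cdot>\<^sub>v x) $ i" using i by simp
    finally show "(x + x) $ i = (2 \<cdot>\<^sub>v x) $ i" .
  qed simp
  have "q (x + x) = q (2 \<cdot>\<^sub>v x)" by (simp only: e)
  also have "\<dots> = 2^2 * q x" by (rule qf_smult[OF assms])
  finally have "q (x + x) = 4 * q x" by simp
  then show ?thesis unfolding bil_def by simp
qed

lemma q_via_bil: "x \<in> carrier_vec N \<Longrightarrow> q x = bil q x x / 2"
  using bil_self by simp

lemma bil_diff_l: assumes "x \<in> carrier_vec N" "y \<in> carrier_vec N" "z \<in> carrier_vec N"
  shows "bil q (x - y) z = bil q x z - bil q y z"
proof -
  have e: "x - y = x + (-1) \<cdot>\<^sub>v y" using assms by (intro eq_vecI) auto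
  have "bil q (x + (-1) \<cdot>\<^sub>v y) z = bil q x z + bil q ((-1) \<cdot>\<^sub>v y) z"
    by (rule bil_add_l) (use assms in auto)
  also have "bil q ((-1) \<cdot>\<^sub>v y) z = (-1) * bil q y z" by (rule bil_smult_l) (use assms in auto)
  finally show ?thesis unfolding e by simp
qed

lemma bil_diff_r: assumes "x \<in> carrier_vec N" "y \<in> carrier_vec N" "z \<in> carrier_vec N"
  shows "bil q z (x - y) = bil q z x - bil q z y"
proof -
  have "bil q z (x - y) = bil q (x - y) z" by (rule bil_sym) (use assms in auto)
  also have "\<dots> = bil q x z - bil q y z" by (rule bil_diff_l[OF assms])
  also have "bil q x z = bil q z x" by (rule bil_sym[OF assms(1,3)])
  also have "bil q y z = bil q z y" by (rule bil_sym[OF assms(2,3)])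
  finally show ?thesis .
qed

definition lc :: "nat \<Rightarrow> (nat \<Rightarrow> 'a) \<Rightarrow> (nat \<Rightarrow> 'a vec) \<Rightarrow> 'a vec" where
  "lc K c B = vec N (\<lambda>r. \<Sum>i<K. c i * B i $ r)"

lemma lc_carrier[simp]: "lc K c B \<in> carrier_vec N"
  unfolding lc_def by simp
lemma lc_dim[simp]: "dim_vec (lc K c B) = N"
  unfolding lc_def by simp
lemma lc_index: "r < N \<Longrightarrow> lc K c B $ r = (\<Sum>i<K. c i * B i $ r)"
  unfolding lc_def by simp

lemma lc_0: "lc 0 c B = 0\<^sub>v N"
  by (rule eq_vecI) (auto simp: lc_index)

lemma lc_Suc: "B K \<in> carrier_vec N \<Longrightarrow> lc (Suc K) c B = lc K c B + c K \<cdot>\<^sub>v B K"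
  by (rule eq_vecI) (auto simp: lc_index)

lemma bil_lc_l: "(\<And>i. i < K \<Longrightarrow> B i \<in> carrier_vec N) \<Longrightarrow> z \<in> carrier_vec N \<Longrightarrow>
   bil q (lc K c B) z = (\<Sum>i<K. c i * bil q (B i) z)"
proof (induction K)
  case 0 then show ?case by (simp add: lc_0 bil_zero_l)
next
  case (Suc K)
  then show ?case by (simp add: lc_Suc bil_add_l bil_smult_l)
qed

lemma bil_lc_r: "bil q z (lc K c B) = (\<Sum>i<K. c i * bil q z (B i))"
  if "\<And>i. i < K \<Longrightarrow> B i \<in> carrier_vec N" "z \<in> carrier_vec N"
proof -
  have "bil q z (lc K c B) = bil q (lc K c B) z" by (rule bil_sym) (use that in auto)
  also have "\<dots> = (\<Sum>i<K. c i * bil q (B i) z)" by (rule bil_lc_l) (use that in auto)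
  also have "\<dots> = (\<Sum>i<K. c i * bil q z (B i))" by (rule sum.cong) (use that bil_sym in auto)
  finally show ?thesis .
qed

lemma lc_cong: "(\<And>i. i < K \<Longrightarrow> c i = d i) \<Longrightarrow> (\<And>i. i < K \<Longrightarrow> B i = C i) \<Longrightarrow> lc K c B = lc K d C"
  unfolding lc_def by (intro eq_vecI) auto

lemma lc_add: "lc K c B + lc K d B = lc K (\<lambda>i. c i + d i) B"
  by (rule eq_vecI) (auto simp: lc_index sum.distrib algebra_simps)

lemma lc_smult: "s \<cdot>\<^sub>v lc K c B = lc K (\<lambda>i. s * c i) B"
  by (rule eq_vecI) (auto simp: lc_index sum_distrib_left algebra_simps)

lemma lc_diff: "lc K c B - lc K d B = lc K (\<lambda>i. c i - d i) B"
  by (rule eq_vecI) (auto simp: lc_index sum_subtractf algebra_simps)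

lemma sum_if_less: "K \<le> (Mx::nat) \<Longrightarrow> (\<Sum>i<Mx. if i < K then f i else 0) = (\<Sum>i<K. f i)"
proof (induction Mx)
  case 0 then show ?case by simp
next
  case (Suc Mx)
  show ?case
  proof (cases "K \<le> Mx")
    case True then show ?thesis using Suc by simp
  next
    case False then have "K = Suc Mx" using Suc by simp
    then show ?thesis by (intro sum.cong) auto
  qed
qed

lemma lc_ext: "K \<le> Mx \<Longrightarrow> lc K c B = lc Mx (\<lambda>i. if i < K then c i else 0) B"
proof (rule eq_vecI)
  fix r assume K: "K \<le> Mx" and r: "r < dim_vec (lc Mx (\<lambda>i. if i < K then c i else 0) B)"
  have "(\<Sum>i<Mx. (if i < K then c i else 0) * B i $ r) = (\<Sum>i<Mx. if i < K then c i * B i $ r else 0)"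
    by (rule sum.cong) auto
  also have "\<dots> = (\<Sum>i<K. c i * B i $ r)" by (rule sum_if_less[OF K])
  finally show "lc K c B $ r = lc Mx (\<lambda>i. if i < K then c i else 0) B $ r"
    using r by (simp add: lc_index)
qed simp

lemma lc_single: assumes "j < K" "B j \<in> carrier_vec N"
  shows "lc K (\<lambda>i. if i = j then s else 0) B = s \<cdot>\<^sub>v B j"
proof (rule eq_vecI)
  fix r assume r: "r < dim_vec (s \<cdot>\<^sub>v B j)"
  have "(\<Sum>i<K. (if i = j then s else 0) * B i $ r) = (\<Sum>i<K. if i = j then s * B j $ r else 0)"
    by (rule sum.cong) auto
  also have "\<dots> = s * B j $ r" using assms(1) by (simp add: sum.delta)
  finally show "lc K (\<lambda>i. if i = j then s else 0) B $ r = (s \<cdot>\<^sub>v B j) $ r"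
    using r assms by (simp add: lc_index)
qed (use assms in simp)

lemma lc_split: assumes "j < K" "B j \<in> carrier_vec N"
  shows "lc K c B = lc K (\<lambda>i. if i = j then 0 else c i) B + c j \<cdot>\<^sub>v B j"
proof -
  have "lc K c B = lc K (\<lambda>i. (if i = j then 0 else c i) + (if i = j then c j else 0)) B"
    by (rule lc_cong) auto
  also have "\<dots> = lc K (\<lambda>i. if i = j then 0 else c i) B + lc K (\<lambda>i. if i = j then c j else 0) B"
    by (simp add: lc_add)
  also have "lc K (\<lambda>i. if i = j then c j else 0) B = c j \<cdot>\<^sub>v B j" using lc_single[of j K B "c j"] assms by simp
  finally show ?thesis .
qed

lemma mat_lc: assumes G: "G \<in> carrier_mat N N" shows "(\<And>i. i < K \<Longrightarrow> B i \<in> carrier_vec N) \<Longrightarrow>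
  G *\<^sub>v lc K c B = lc K c (\<lambda>i. G *\<^sub>v B i)"
proof (induction K)
  case 0
  show ?case using G by (intro eq_vecI) (auto simp: lc_0 lc_index scalar_prod_def)
next
  case (Suc K)
  have "G *\<^sub>v lc (Suc K) c B = G *\<^sub>v lc K c B + G *\<^sub>v (c K \<cdot>\<^sub>v B K)"
    using Suc G by (simp add: lc_Suc mult_add_distrib_mat_vec[OF G])
  also have "\<dots> = lc K c (\<lambda>i. G *\<^sub>v B i) + c K \<cdot>\<^sub>v (G *\<^sub>v B K)"
    using Suc G by (simp add: mult_mat_vec[OF G])
  also have "\<dots> = lc (Suc K) c (\<lambda>i. G *\<^sub>v B i)"
    using Suc G by (simp add: lc_Suc)
  finally show ?case .
qed

lemma mat_of_cols_lc: assumes "length bs = N" "c \<in> carrier_vec N"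
  shows "mat_of_cols N bs *\<^sub>v c = lc N (\<lambda>i. c $ i) (\<lambda>i. bs ! i)"
proof (rule eq_vecI)
  fix r assume r: "r < dim_vec (lc N (\<lambda>i. c $ i) (\<lambda>i. bs ! i))"
  then have r': "r < N" by simp
  show "(mat_of_cols N bs *\<^sub>v c) $ r = lc N (\<lambda>i. c $ i) (\<lambda>i. bs ! i) $ r"
    using assms r' by (auto simp: lc_index scalar_prod_def mat_of_cols_def row_def atLeast0LessThan
      intro!: sum.cong)
qed (use assms in simp)

end


context qsetup begin

definition gv :: "nat \<Rightarrow> 'a" where "gv i = (if i = n then 2*a else 1)"

definition gram :: "(nat \<Rightarrow> 'a vec) \<Rightarrow> bool" where
  "gram B \<longleftrightarrow> (\<forall>i<N. B i \<in> carrier_vec N) \<and>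
     (\<forall>i<N. \<forall>j<N. bil q (B i) (B j) = (if i + j = 2*n then gv i else 0))"

definition Lat :: "'a set \<Rightarrow> (nat \<Rightarrow> 'a vec) \<Rightarrow> 'a vec set" where
  "Lat R B = {lc N c B | c. \<forall>i<N. c i \<in> R}"

definition good :: "(nat \<Rightarrow> 'a vec) \<Rightarrow> bool" where
  "good B \<longleftrightarrow> gram B \<and> Lat UNIV B = carrier_vec N"

lemma gv_nz: "gv i \<noteq> 0"
  unfolding gv_def using a_nz by simp

lemma N_less: "i < N \<longleftrightarrow> i \<le> 2*n"
  unfolding N_def by auto

lemma gv_sym: "i < N \<Longrightarrow> gv (2*n - i) = gv i"
  unfolding gv_def N_def by auto

lemma gramD: "gram B \<Longrightarrow> i < N \<Longrightarrow> B i \<in> carrier_vec N"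
  "gram B \<Longrightarrow> i < N \<Longrightarrow> j < N \<Longrightarrow> bil q (B i) (B j) = (if i + j = 2*n then gv i else 0)"
  unfolding gram_def by auto

lemma coord: assumes g: "gram B" and j: "j < N"
  shows "bil q (lc N c B) (B j) = c (2*n - j) * gv j"
proof -
  have "bil q (lc N c B) (B j) = (\<Sum>i<N. c i * bil q (B i) (B j))"
    by (rule bil_lc_l) (use g j gramD in auto)
  also have "\<dots> = (\<Sum>i<N. if i = 2*n - j then c i * gv i else 0)"
    by (rule sum.cong) (use g j in \<open>auto simp: gramD N_less\<close>)
  also have "\<dots> = c (2*n - j) * gv (2*n - j)"
    by (simp add: sum.delta N_less)
  also have "gv (2*n - j) = gv j" by (rule gv_sym[OF j])
  finally show ?thesis .
qed

lemma coord_r: assumes g: "gram B" and j: "j < N"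
  shows "bil q (B j) (lc N c B) = c (2*n - j) * gv j"
  using coord[OF g j] bil_sym[of "B j" "lc N c B"] gramD(1)[OF g j] by simp

lemma lc_coeff_eq: assumes g: "gram B" and e: "lc N c B = lc N d B" and i: "i < N"
  shows "c i = d i"
proof -
  have j: "2*n - i < N" using i by (simp add: N_less)
  have ii: "2*n - (2*n - i) = i" using i by (simp add: N_less)
  have "c i * gv (2*n - i) = bil q (lc N c B) (B (2*n - i))" using coord[OF g j, of c] ii by simp
  also have "\<dots> = bil q (lc N d B) (B (2*n - i))" using e by simp
  also have "\<dots> = d i * gv (2*n - i)" using coord[OF g j, of d] ii by simp
  finally have "c i * gv (2*n - i) = d i * gv (2*n - i)" .
  then show ?thesis by (rule mult_right_cancel[OF gv_nz, THEN iffD1])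
qed

lemma lc_zero_coeff: assumes g: "gram B" and e: "lc N c B = 0\<^sub>v N" and i: "i < N"
  shows "c i = 0"
proof -
  have "lc N (\<lambda>_. 0) B = 0\<^sub>v N" by (rule eq_vecI) (auto simp: lc_index)
  then show ?thesis using lc_coeff_eq[OF g _ i, of c "\<lambda>_. 0"] e by simp
qed

lemma bil_lc_lc: assumes g: "gram B"
  shows "bil q (lc N c B) (lc N d B) = (\<Sum>i<N. c i * d (2*n - i) * gv i)"
proof -
  have "bil q (lc N c B) (lc N d B) = (\<Sum>i<N. c i * bil q (B i) (lc N d B))"
    by (rule bil_lc_l) (use g gramD in auto)
  also have "\<dots> = (\<Sum>i<N. c i * d (2*n - i) * gv i)"
    by (rule sum.cong) (use coord_r[OF g] in auto)
  finally show ?thesis .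
qed

lemma sym_sum: "(\<Sum>i<2*(m::nat)+1. f i) = (\<Sum>i<m. f i + f (2*m - i)) + (f m :: 'b::comm_monoid_add)"
proof -
  have U: "{..<2*m+1} = {..<m} \<union> ({m} \<union> (\<lambda>i. 2*m - i) ` {..<m})"
  proof (intro equalityI subsetI)
    fix x assume "x \<in> {..<2*m+1}"
    then have "x < m \<or> x = m \<or> (x > m \<and> x \<le> 2*m)" by auto
    then show "x \<in> {..<m} \<union> ({m} \<union> (\<lambda>i. 2*m - i) ` {..<m})"
    proof (elim disjE)
      assume "x > m \<and> x \<le> 2*m"
      then have "x = 2*m - (2*m - x)" "2*m - x < m" by auto
      then show ?thesis by blast
    qed auto
  qed auto
  have inj: "inj_on (\<lambda>i. 2*m - i) {..<m}" by (rule inj_onI) auto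
  have nm: "m \<notin> (\<lambda>i. 2*m - i) ` {..<m}" by auto
  have "(\<Sum>i<2*m+1. f i) = sum f {..<m} + sum f ({m} \<union> (\<lambda>i. 2*m - i) ` {..<m})"
    unfolding U by (rule sum.union_disjoint) auto
  also have "sum f ({m} \<union> (\<lambda>i. 2*m - i) ` {..<m}) = f m + sum f ((\<lambda>i. 2*m - i) ` {..<m})"
    using nm by simp
  also have "sum f ((\<lambda>i. 2*m - i) ` {..<m}) = (\<Sum>i<m. f (2*m - i))"
    by (subst sum.reindex[OF inj]) simp
  finally show ?thesis by (simp add: sum.distrib algebra_simps)
qed

lemma q_lc: assumes g: "gram B"
  shows "q (lc N c B) = (\<Sum>i<n. c i * c (2*n - i)) + a * (c n)^2"
proof -
  have "2 * q (lc N c B) = bil q (lc N c B) (lc N c B)" by (simp add: bil_self)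
  also have "\<dots> = (\<Sum>i<N. c i * c (2*n - i) * gv i)" by (rule bil_lc_lc[OF g])
  also have "\<dots> = (\<Sum>i<n. c i * c (2*n - i) * gv i + c (2*n - i) * c (2*n - (2*n - i)) * gv (2*n - i))
      + c n * c (2*n - n) * gv n"
    unfolding N_def by (rule sym_sum)
  also have "(\<Sum>i<n. c i * c (2*n - i) * gv i + c (2*n - i) * c (2*n - (2*n - i)) * gv (2*n - i))
     = (\<Sum>i<n. 2 * (c i * c (2*n - i)))"
    by (rule sum.cong) (auto simp: gv_def)
  also have "c n * c (2*n - n) * gv n = 2 * (a * (c n)^2)" by (simp add: gv_def power2_eq_square)
  also have "(\<Sum>i<n. 2 * (c i * c (2*n - i))) = 2 * (\<Sum>i<n. c i * c (2*n - i))"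
    by (rule sum_distrib_left[symmetric])
  finally have "2 * q (lc N c B) = 2 * (\<Sum>i<n. c i * c (2*n - i)) + 2 * (a * (c n)^2)" .
  then have "2 * q (lc N c B) = 2 * ((\<Sum>i<n. c i * c (2*n - i)) + a * (c n)^2)"
    by (simp only: distrib_left)
  moreover have two: "(2::'a) \<noteq> 0" by simp
  ultimately show ?thesis using mult_left_cancel[OF two] by blast
qed

definition subr :: "'a set \<Rightarrow> bool" where
  "subr R \<longleftrightarrow> 0 \<in> R \<and> 1 \<in> R \<and> (\<forall>x\<in>R. \<forall>y\<in>R. x + y \<in> R \<and> x * y \<in> R)"

lemma subr_O: "subr Ov"
  unfolding subr_def by (auto intro: Oadd Omult)
lemma subr_UNIV: "subr UNIV"
  unfolding subr_def by auto

lemma Lat_carrier: "Lat R B \<subseteq> carrier_vec N"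
  unfolding Lat_def by auto

lemma Lat_add: assumes R: "subr R" and x: "x \<in> Lat R B" and y: "y \<in> Lat R B"
  shows "x + y \<in> Lat R B"
proof -
  obtain c where c: "x = lc N c B" "\<forall>i<N. c i \<in> R" using x unfolding Lat_def by auto
  obtain d where d: "y = lc N d B" "\<forall>i<N. d i \<in> R" using y unfolding Lat_def by auto
  have "x + y = lc N (\<lambda>i. c i + d i) B" using c d lc_add by simp
  moreover have "\<forall>i<N. c i + d i \<in> R" using c d R unfolding subr_def by auto
  ultimately show ?thesis unfolding Lat_def by blast
qed

lemma Lat_smult: assumes R: "subr R" and s: "s \<in> R" and x: "x \<in> Lat R B"
  shows "s \<cdot>\<^sub>v x \<in> Lat R B"
proof -
  obtain c where c: "x = lc N c B" "\<forall>i<N. c i \<in> R" using x unfolding Lat_def by auto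
  have "s \<cdot>\<^sub>v x = lc N (\<lambda>i. s * c i) B" using c lc_smult by simp
  moreover have "\<forall>i<N. s * c i \<in> R" using c s R unfolding subr_def by auto
  ultimately show ?thesis unfolding Lat_def by blast
qed

lemma Lat_zero: assumes R: "subr R" shows "0\<^sub>v N \<in> Lat R B"
proof -
  have "lc N (\<lambda>_. 0) B = 0\<^sub>v N" by (rule eq_vecI) (auto simp: lc_index)
  moreover have "\<forall>i<N. (0::'a) \<in> R" using R unfolding subr_def by auto
  ultimately show ?thesis unfolding Lat_def by force
qed

lemma Lat_basis: assumes R: "subr R" and j: "j < N" and B: "B j \<in> carrier_vec N"
  shows "B j \<in> Lat R B"
proof -
  define cc where "cc = (\<lambda>i. if i = j then (1::'a) else 0)"
  have "lc N cc B = 1 \<cdot>\<^sub>v B j" unfolding cc_def by (rule lc_single[of j N B, OF j B])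
  also have "\<dots> = B j" using B by simp
  finally have "B j = lc N cc B" by simp
  moreover have "\<forall>i<N. cc i \<in> R" using R unfolding subr_def cc_def by auto
  ultimately show ?thesis unfolding Lat_def by blast
qed

lemma Lat_lc: assumes R: "subr R"
  shows "(\<And>i. i < K \<Longrightarrow> C i \<in> Lat R B) \<Longrightarrow> (\<And>i. i < K \<Longrightarrow> c i \<in> R) \<Longrightarrow> lc K c C \<in> Lat R B"
proof (induction K)
  case 0 then show ?case using Lat_zero[OF R] by (simp add: lc_0)
next
  case (Suc K)
  have CK: "C K \<in> carrier_vec N" using Suc.prems(1)[of K] Lat_carrier by auto
  have "lc K c C \<in> Lat R B" using Suc by simp
  moreover have "c K \<cdot>\<^sub>v C K \<in> Lat R B" using Suc.prems by (intro Lat_smult[OF R]) auto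
  ultimately show ?case using Lat_add[OF R] lc_Suc[of C K c, OF CK] by simp
qed

lemma Lat_subset: assumes R: "subr R" and C: "\<And>i. i < N \<Longrightarrow> C i \<in> Lat R B"
  shows "Lat R C \<subseteq> Lat R B"
  unfolding Lat_def[of R C] using Lat_lc[OF R C] by auto

lemma Lat_O_sub_UNIV: "Lat Ov B \<subseteq> Lat UNIV B"
  unfolding Lat_def by auto

end


context qsetup begin

definition invol :: "(nat \<Rightarrow> nat) \<Rightarrow> bool" where
  "invol \<tau> \<longleftrightarrow> (\<forall>i<N. \<tau> i < N \<and> \<tau> (\<tau> i) = i \<and> \<tau> (2*n - i) = 2*n - \<tau> i)"

lemma invol_bij: assumes "invol \<tau>" shows "bij_betw \<tau> {..<N} {..<N}"
  by (rule bij_betw_byWitness[where f' = \<tau>]) (use assms in \<open>auto simp: invol_def\<close>)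

lemma lc_reindex: assumes "invol \<tau>"
  shows "lc N d B = lc N (\<lambda>i. d (\<tau> i)) (\<lambda>i. B (\<tau> i))"
proof (rule eq_vecI)
  fix r assume r: "r < dim_vec (lc N (\<lambda>i. d (\<tau> i)) (\<lambda>i. B (\<tau> i)))"
  have "(\<Sum>i<N. d (\<tau> i) * B (\<tau> i) $ r) = (\<Sum>i<N. d i * B i $ r)"
    by (rule sum.reindex_bij_betw[OF invol_bij[OF assms], of "\<lambda>i. d i * B i $ r"])
  then show "lc N d B $ r = lc N (\<lambda>i. d (\<tau> i)) (\<lambda>i. B (\<tau> i)) $ r"
    using r by (simp add: lc_index)
qed simp

lemma invol_n: assumes "invol \<tau>" shows "\<tau> n = n"
proof -
  have "n < N" unfolding N_def by simp
  then have "\<tau> (2*n - n) = 2*n - \<tau> n" using assms unfolding invol_def by blast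
  then show ?thesis by simp
qed

lemma Lat_reindex: assumes t: "invol \<tau>" and R: "subr R"
  shows "Lat R (\<lambda>i. B (\<tau> i)) = Lat R B"
proof (intro equalityI subsetI)
  fix x assume "x \<in> Lat R (\<lambda>i. B (\<tau> i))"
  then obtain c where c: "x = lc N c (\<lambda>i. B (\<tau> i))" "\<forall>i<N. c i \<in> R" unfolding Lat_def by auto
  have "x = lc N (\<lambda>i. c (\<tau> i)) (\<lambda>i. B (\<tau> (\<tau> i)))" using c lc_reindex[OF t] by simp
  also have "\<dots> = lc N (\<lambda>i. c (\<tau> i)) B" by (rule lc_cong) (use t in \<open>auto simp: invol_def\<close>)
  finally show "x \<in> Lat R B" using c t unfolding Lat_def invol_def by auto
next
  fix x assume "x \<in> Lat R B"
  then obtain c where c: "x = lc N c B" "\<forall>i<N. c i \<in> R" unfolding Lat_def by auto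
  have "x = lc N (\<lambda>i. c (\<tau> i)) (\<lambda>i. B (\<tau> i))" using c lc_reindex[OF t] by simp
  then show "x \<in> Lat R (\<lambda>i. B (\<tau> i))" using c t unfolding Lat_def invol_def by auto
qed

lemma gram_reindex: assumes t: "invol \<tau>" and g: "gram B"
  shows "gram (\<lambda>i. B (\<tau> i))"
  unfolding gram_def
proof (intro conjI allI impI)
  fix i assume "i < N" then show "B (\<tau> i) \<in> carrier_vec N" using t g unfolding invol_def gram_def by auto
next
  fix i j assume i: "i < N" and j: "j < N"
  have ti: "\<tau> i < N" "\<tau> (\<tau> i) = i" "\<tau> (2*n - i) = 2*n - \<tau> i" using t i unfolding invol_def by auto
  have tj: "\<tau> j < N" "\<tau> (\<tau> j) = j" using t j unfolding invol_def by auto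
  have iff: "\<tau> i + \<tau> j = 2*n \<longleftrightarrow> i + j = 2*n"
  proof
    assume "\<tau> i + \<tau> j = 2*n"
    then have "\<tau> j = 2*n - \<tau> i" by simp
    then have "\<tau> (\<tau> j) = \<tau> (2*n - \<tau> i)" by simp
    moreover have "\<tau> (2*n - \<tau> i) = 2*n - \<tau> (\<tau> i)" using t ti(1) unfolding invol_def by blast
    ultimately have "j = 2*n - i" using tj ti by simp
    then show "i + j = 2*n" using i by (simp add: N_less)
  next
    assume "i + j = 2*n"
    then have "j = 2*n - i" by simp
    then have "\<tau> j = 2*n - \<tau> i" using ti by simp
    then show "\<tau> i + \<tau> j = 2*n" using ti(1) by (simp add: N_less)
  qed
  have gvi: "gv (\<tau> i) = gv i"
  proof -
    have "\<tau> i = n \<longleftrightarrow> i = n" using invol_n[OF t] ti by metis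
    then show ?thesis unfolding gv_def by simp
  qed
  show "bil q (B (\<tau> i)) (B (\<tau> j)) = (if i + j = 2 * n then gv i else 0)"
    using gramD(2)[OF g ti(1) tj(1)] iff gvi by simp
qed

lemma good_reindex: assumes t: "invol \<tau>" and g: "good B"
  shows "good (\<lambda>i. B (\<tau> i))"
  using g gram_reindex[OF t] Lat_reindex[OF t subr_UNIV] unfolding good_def by simp

end


context qsetup begin

lemma lc_cong0: assumes "\<And>i. i < K \<Longrightarrow> c i = 0 \<or> B i = C i" shows "lc K c B = lc K c C"
proof (rule eq_vecI)
  fix r assume r: "r < dim_vec (lc K c C)"
  have e: "\<And>i. i < K \<Longrightarrow> c i * B i $ r = c i * C i $ r" using assms by (metis mult_zero_left)
  have "(\<Sum>i<K. c i * B i $ r) = (\<Sum>i<K. c i * C i $ r)" by (rule sum.cong) (use e in auto)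
  then show "lc K c B $ r = lc K c C $ r" using r by (simp add: lc_index)
qed simp

lemma gvO: "gv i \<in> Ov"
  unfolding gv_def using Omult[OF O2 aO] by auto

lemma eichler:
  assumes g: "good B" and k: "k < n"
    and dO: "\<forall>i<N. d i \<in> Ov"
    and dz: "\<forall>i<N. (i < k \<or> 2*n - k < i) \<longrightarrow> d i = 0"
    and qu: "q (lc N d B) = 0"
    and xnz: "d k \<noteq> 0" and xv: "v (d k) = 0"
  shows "\<exists>B'. good B' \<and> Lat Ov B' = Lat Ov B \<and> (\<forall>i<k. B' i = B i) \<and> B' k = lc N d B"
proof -
  define x where "x = d k"
  define u where "u = lc N d B"
  define K' where "K' = 2*n - k"
  define F where "F = B K'"
  define \<beta> where "\<beta> i = (if k < i \<and> i < K' then d (2*n - i) / x * gv i else 0)" for i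
  define B' where "B' i = (if i = k then u else if i = K' then (1/x) \<cdot>\<^sub>v F
       else if k < i \<and> i < K' then B i + (- \<beta> i) \<cdot>\<^sub>v F else B i)" for i
  have gr: "gram B" using g unfolding good_def by simp
  have kN: "k < N" and K'N: "K' < N" and kK': "k < K'" and K'n: "K' \<noteq> n" and kn: "k \<noteq> n"
    and kk: "2*n - K' = k" and nK: "2*n - k = K'"
    using k unfolding N_def K'_def by auto
  have gvk: "gv k = 1" and gvK': "gv K' = 1" using kn K'n unfolding gv_def by auto
  have Bc: "\<And>i. i < N \<Longrightarrow> B i \<in> carrier_vec N" using gramD(1)[OF gr] .
  have uc: "u \<in> carrier_vec N" unfolding u_def by simp
  have Fc: "F \<in> carrier_vec N" unfolding F_def using Bc[OF K'N] .
  have B'c: "\<And>i. i < N \<Longrightarrow> B' i \<in> carrier_vec N"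
    unfolding B'_def using Bc uc Fc by auto
  have xO: "x \<in> Ov" unfolding x_def using dO kN by auto
  have xnz': "x \<noteq> 0" and xv': "v x = 0" unfolding x_def using xnz xv by auto
  have bBB: "\<And>i j. i < N \<Longrightarrow> j < N \<Longrightarrow> bil q (B i) (B j) = (if i + j = 2*n then gv i else 0)"
    using gramD(2)[OF gr] .
  have buB: "\<And>j. j < N \<Longrightarrow> bil q u (B j) = d (2*n - j) * gv j"
    unfolding u_def by (rule coord[OF gr])
  have bBu: "\<And>j. j < N \<Longrightarrow> bil q (B j) u = d (2*n - j) * gv j"
    unfolding u_def by (rule coord_r[OF gr])
  have buu: "bil q u u = 0" using bil_self[OF uc] qu unfolding u_def by simp
  have bFB: "\<And>j. j < N \<Longrightarrow> bil q F (B j) = (if j = k then 1 else 0)"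
    unfolding F_def using bBB K'N gvK' kk by (auto simp: N_less K'_def)
  have bBF: "\<And>j. j < N \<Longrightarrow> bil q (B j) F = (if j = k then 1 else 0)"
    using bFB bil_sym[OF Fc Bc] by simp
  have buF: "bil q u F = x" unfolding F_def using buB[OF K'N] kk gvK' x_def by simp
  have bFu: "bil q F u = x" using buF bil_sym[OF Fc uc] by simp
  have bFF: "bil q F F = 0" using bFB[OF K'N] kK' unfolding F_def by simp
  have dlo: "\<And>j. j < k \<Longrightarrow> d (2*n - j) = 0" using dz k by (auto simp: N_less)
  have dhi: "\<And>j. j < N \<Longrightarrow> K' < j \<Longrightarrow> d (2*n - j) = 0" using dz k unfolding K'_def by (auto simp: N_less)
  have expl: "\<And>i y. i < N \<Longrightarrow> y \<in> carrier_vec N \<Longrightarrow> bil q (B' i) y =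
      (if i = k then bil q u y else if i = K' then (1/x) * bil q F y
       else if k < i \<and> i < K' then bil q (B i) y - \<beta> i * bil q F y else bil q (B i) y)"
    unfolding B'_def using Bc Fc by (auto simp: bil_add_l bil_smult_l)
  have expr: "\<And>i y. i < N \<Longrightarrow> y \<in> carrier_vec N \<Longrightarrow> bil q y (B' i) =
      (if i = k then bil q y u else if i = K' then (1/x) * bil q y F
       else if k < i \<and> i < K' then bil q y (B i) - \<beta> i * bil q y F else bil q y (B i))"
    unfolding B'_def using Bc Fc by (auto simp: bil_add_r bil_smult_r)
  have ik: "\<And>i. i < N \<Longrightarrow> (i + k = 2*n) = (i = K')" "\<And>i. i < N \<Longrightarrow> (k + i = 2*n) = (i = K')"
     "\<And>i. i < N \<Longrightarrow> (i + K' = 2*n) = (i = k)" "\<And>i. i < N \<Longrightarrow> (K' + i = 2*n) = (i = k)"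
    unfolding K'_def using k by (auto simp: N_less)
  have neqs: "K' \<noteq> k" "k \<noteq> K'" "k + k \<noteq> 2*n" "k + K' = 2*n" "K' + k = 2*n" "K' + K' \<noteq> 2*n"
    using kK' k unfolding K'_def by auto
  have \<beta>mid: "\<And>i. k < i \<Longrightarrow> i < K' \<Longrightarrow> \<beta> i = d (2*n - i) / x * gv i" unfolding \<beta>_def by simp
  have \<beta>out: "\<And>i. \<not> (k < i \<and> i < K') \<Longrightarrow> \<beta> i = 0" unfolding \<beta>_def by auto
  have reg: "\<And>i. i < N \<Longrightarrow> i = k \<or> i = K' \<or> (k < i \<and> i < K') \<or> i < k \<or> K' < i"
    by auto
  have gram': "gram B'"
    unfolding gram_def
  proof (intro conjI allI impI)
    fix i assume "i < N" then show "B' i \<in> carrier_vec N" by (rule B'c)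
  next
    fix i j assume i: "i < N" and j: "j < N"
    show "bil q (B' i) (B' j) = (if i + j = 2 * n then gv i else 0)"
      apply (simp only: expl[OF i B'c[OF j]])
      apply (simp only: expr[OF j uc] expr[OF j Fc] expr[OF j Bc[OF i]])
      using reg[OF i] reg[OF j]
      apply (elim disjE)
      apply (simp_all add: expl[OF i] expr[OF j] Bc uc Fc i j bBB buB bBu buu bFB bBF buF bFu bFF ik neqs \<beta>mid dlo dhi gvk gvK' xnz')
      done
  qed
  have R: "subr Ov" by (rule subr_O)
  have B'k: "B' k = u" unfolding B'_def by simp
  have B'lo: "\<forall>i<k. B' i = B i" unfolding B'_def using kK' by auto
  have B'K': "B' K' = (1/x) \<cdot>\<^sub>v F" unfolding B'_def using neqs by simp
  have B'mid: "\<And>i. k < i \<Longrightarrow> i < K' \<Longrightarrow> B' i = B i + (- \<beta> i) \<cdot>\<^sub>v F" unfolding B'_def by auto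
  have B'out: "\<And>i. i \<noteq> k \<Longrightarrow> i \<noteq> K' \<Longrightarrow> \<not> (k < i \<and> i < K') \<Longrightarrow> B' i = B i"
    unfolding B'_def by auto
  have \<beta>O: "\<And>i. i < N \<Longrightarrow> \<beta> i \<in> Ov"
  proof -
    fix i assume i: "i < N"
    show "\<beta> i \<in> Ov"
    proof (cases "k < i \<and> i < K'")
      case True
      have "2*n - i < N" using i by (simp add: N_less)
      then have "d (2*n - i) / x \<in> Ov" using dO Ounit_div xnz' xv' by auto
      then have "d (2*n - i) / x * gv i \<in> Ov" using Omult gvO by blast
      then show ?thesis using \<beta>mid True by simp
    qed (use \<beta>out in auto)
  qed
  have invx: "1/x \<in> Ov" using Ounit_div[OF O1 xnz' xv'] .
  have FL: "F \<in> Lat Ov B" unfolding F_def by (rule Lat_basis[of Ov K' B, OF R K'N Bc[OF K'N]])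
  have in1: "\<And>i. i < N \<Longrightarrow> B' i \<in> Lat Ov B"
  proof -
    fix i assume i: "i < N"
    consider "i = k" | "i = K'" | "k < i \<and> i < K'" | "i \<noteq> k \<and> i \<noteq> K' \<and> \<not> (k < i \<and> i < K')" by blast
    then show "B' i \<in> Lat Ov B"
    proof cases
      case 1 then show ?thesis using B'k dO unfolding u_def Lat_def by blast
    next
      case 2 then show ?thesis using B'K' Lat_smult[OF R invx FL] by simp
    next
      case 3
      have "- \<beta> i \<in> Ov" using \<beta>O[OF i] Oneg by auto
      then have "(- \<beta> i) \<cdot>\<^sub>v F \<in> Lat Ov B" using Lat_smult[OF R _ FL] by blast
      then show ?thesis using 3 B'mid Lat_add[OF R Lat_basis[of Ov i B, OF R i Bc[OF i]]] by simp
    next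
      case 4 then show ?thesis using B'out Lat_basis[of Ov i B, OF R i Bc[OF i]] by simp
    qed
  qed
  have in2: "\<And>i. i < N \<Longrightarrow> i \<noteq> k \<Longrightarrow> B i \<in> Lat Ov B'"
  proof -
    fix i assume i: "i < N" and ik: "i \<noteq> k"
    have K'L: "B' K' \<in> Lat Ov B'" by (rule Lat_basis[of Ov K' B', OF R K'N B'c[OF K'N]])
    consider "i = K'" | "k < i \<and> i < K'" | "i \<noteq> k \<and> i \<noteq> K' \<and> \<not> (k < i \<and> i < K')" using ik by blast
    then show "B i \<in> Lat Ov B'"
    proof cases
      case 1
      have "x \<cdot>\<^sub>v B' K' = F" unfolding B'K' using xnz' by (simp add: smult_smult_assoc)
      then show ?thesis using 1 Lat_smult[OF R xO K'L] unfolding F_def by simp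
    next
      case 2
      have e1: "(\<beta> i * x) \<cdot>\<^sub>v B' K' = \<beta> i \<cdot>\<^sub>v F" unfolding B'K' using xnz' by (simp add: smult_smult_assoc)
      have e2: "B i + (- \<beta> i) \<cdot>\<^sub>v F + \<beta> i \<cdot>\<^sub>v F = B i"
        by (rule eq_vecI) (use Bc[OF i] Fc in auto)
      have "B' i + (\<beta> i * x) \<cdot>\<^sub>v B' K' = B i" using e1 e2 B'mid 2 by simp
      moreover have "B' i + (\<beta> i * x) \<cdot>\<^sub>v B' K' \<in> Lat Ov B'"
        using Lat_add[OF R Lat_basis[of Ov i B', OF R i B'c[OF i]] Lat_smult[OF R _ K'L]] \<beta>O[OF i] xO Omult by blast
      ultimately show ?thesis by simp
    next
      case 3 then show ?thesis using B'out Lat_basis[of Ov i B', OF R i B'c[OF i]] by simp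
    qed
  qed
  define d' where "d' i = (if i = k then 0 else d i)" for i
  define C where "C i = (if i = k then 0\<^sub>v N else B i)" for i
  have usplit: "u = lc N d' B + x \<cdot>\<^sub>v B k"
    unfolding u_def d'_def x_def by (rule lc_split[of k N B d, OF kN Bc[OF kN]])
  have wC: "lc N d' B = lc N d' C" by (rule lc_cong0) (auto simp: d'_def C_def)
  have wL: "lc N d' C \<in> Lat Ov B'"
  proof (rule Lat_lc[OF R])
    fix i assume i: "i < N"
    show "C i \<in> Lat Ov B'" unfolding C_def using in2[OF i] Lat_zero[OF R] by auto
    show "d' i \<in> Ov" unfolding d'_def using dO i by auto
  qed
  have ekk: "(1/x) \<cdot>\<^sub>v (u + (-1) \<cdot>\<^sub>v lc N d' B) = B k"
  proof (rule eq_vecI)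
    fix r assume r: "r < dim_vec (B k)"
    then have rN: "r < N" using Bc[OF kN] by simp
    have "u $ r = lc N d' B $ r + x * B k $ r" using usplit rN Bc[OF kN] by simp
    then show "((1/x) \<cdot>\<^sub>v (u + (-1) \<cdot>\<^sub>v lc N d' B)) $ r = B k $ r"
      using rN uc xnz' by (simp add: field_simps)
  qed (use uc Bc[OF kN] in simp)
  have in2k: "B k \<in> Lat Ov B'"
  proof -
    have uL: "u \<in> Lat Ov B'" using Lat_basis[of Ov k B', OF R kN B'c[OF kN]] B'k by simp
    have "(-1) \<cdot>\<^sub>v lc N d' B \<in> Lat Ov B'" using wC wL Lat_smult[OF R _ wL, of "-1"] Oneg[OF O1] by simp
    then have "u + (-1) \<cdot>\<^sub>v lc N d' B \<in> Lat Ov B'" using Lat_add[OF R uL] by blast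
    then show ?thesis using Lat_smult[OF R invx] ekk by metis
  qed
  have allin2: "\<And>i. i < N \<Longrightarrow> B i \<in> Lat Ov B'" using in2 in2k by blast
  have LatEq: "Lat Ov B' = Lat Ov B"
    using Lat_subset[where R=Ov and C=B' and B=B, OF R in1] Lat_subset[where R=Ov and C=B and B=B', OF R allin2] by blast
  have "Lat UNIV B \<subseteq> Lat UNIV B'"
    by (rule Lat_subset[where R=UNIV and C=B and B=B', OF subr_UNIV]) (use allin2 Lat_O_sub_UNIV in blast)
  then have "Lat UNIV B' = carrier_vec N" using g Lat_carrier[of UNIV B'] unfolding good_def by blast
  then have "good B'" using gram' unfolding good_def by simp
  then show ?thesis using LatEq B'lo B'k unfolding u_def by blast
qed

end


context qsetup begin

lemma mat_of_cols_index: assumes "c \<in> carrier_vec m" "length bs = m" "s < N"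
  shows "(mat_of_cols N bs *\<^sub>v c) $ s = (\<Sum>r<m. bs ! r $ s * c $ r)"
  using assms by (auto simp: scalar_prod_def mat_of_cols_def row_def atLeast0LessThan intro!: sum.cong)

lemma dep: assumes len: "length bs = m" and z: "\<forall>j<m+1. z j \<in> fspan N bs"
  shows "\<exists>e. (\<exists>j<m+1. e j \<noteq> 0) \<and> lc (m+1) e z = 0\<^sub>v N"
proof -
  have "\<forall>j. \<exists>c. j < m+1 \<longrightarrow> (c \<in> carrier_vec m \<and> z j = mat_of_cols N bs *\<^sub>v c)"
    using z len unfolding fspan_def by auto
  from choice[OF this] obtain cc where cc: "\<And>j. j < m+1 \<Longrightarrow> cc j \<in> carrier_vec m \<and> z j = mat_of_cols N bs *\<^sub>v cc j"
    by blast
  define Cm where "Cm = mat\<^sub>r (m+1) (m+1) (\<lambda>r. if r = m then 0\<^sub>v (m+1) else vec (m+1) (\<lambda>j. cc j $ r))"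
  have Cmc: "Cm \<in> carrier_mat (m+1) (m+1)" unfolding Cm_def by simp
  have "det Cm = 0" unfolding Cm_def by (rule det_row_0) auto
  then obtain e where e: "e \<in> carrier_vec (m+1)" "e \<noteq> 0\<^sub>v (m+1)" "Cm *\<^sub>v e = 0\<^sub>v (m+1)"
    using det_0_iff_vec_prod_zero[OF Cmc] by blast
  have ez: "\<exists>j<m+1. e $ j \<noteq> 0"
  proof (rule ccontr)
    assume "\<not> (\<exists>j<m+1. e $ j \<noteq> 0)"
    then have "e = 0\<^sub>v (m+1)" using e(1) by (intro eq_vecI) auto
    then show False using e(2) by simp
  qed
  have key: "\<And>r. r < m \<Longrightarrow> (\<Sum>j<m+1. e $ j * cc j $ r) = 0"
  proof -
    fix r assume r: "r < m"
    have "(Cm *\<^sub>v e) $ r = 0" using e(3) r by simp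
    moreover have "(Cm *\<^sub>v e) $ r = (\<Sum>j<m+1. cc j $ r * e $ j)"
      using r e(1) unfolding Cm_def by (auto simp: scalar_prod_def atLeast0LessThan)
    ultimately show "(\<Sum>j<m+1. e $ j * cc j $ r) = 0" by (simp add: mult.commute)
  qed
  have "lc (m+1) (\<lambda>j. e $ j) z = 0\<^sub>v N"
  proof (rule eq_vecI)
    fix s assume "s < dim_vec (0\<^sub>v N :: 'a vec)"
    then have s: "s < N" by simp
    have "lc (m+1) (\<lambda>j. e $ j) z $ s = (\<Sum>j<m+1. e $ j * z j $ s)" using s by (simp add: lc_index)
    also have "\<dots> = (\<Sum>j<m+1. e $ j * (\<Sum>r<m. bs ! r $ s * cc j $ r))"
    proof (rule sum.cong)
      fix j assume "j \<in> {..<m+1}"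
      then have j: "j < m+1" by simp
      show "e $ j * z j $ s = e $ j * (\<Sum>r<m. bs ! r $ s * cc j $ r)"
        using cc[OF j] mat_of_cols_index[of "cc j" m bs s] len s by simp
    qed simp
    also have "\<dots> = (\<Sum>j<m+1. \<Sum>r<m. bs ! r $ s * (e $ j * cc j $ r))"
      by (simp add: sum_distrib_left algebra_simps)
    also have "\<dots> = (\<Sum>r<m. \<Sum>j<m+1. bs ! r $ s * (e $ j * cc j $ r))"
      by (rule sum.swap)
    also have "\<dots> = (\<Sum>r<m. bs ! r $ s * (\<Sum>j<m+1. e $ j * cc j $ r))"
      by (simp only: sum_distrib_left)
    also have "\<dots> = 0" using key by simp
    finally show "lc (m+1) (\<lambda>j. e $ j) z $ s = 0\<^sub>v N $ s" using s by simp
  qed simp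
  then show ?thesis using ez by blast
qed

end


locale flagsetup = qsetup v q n a for v :: "'a::field_char_0 \<Rightarrow> int" and q n a +
  fixes Wf :: "nat \<Rightarrow> 'a vec set"
  assumes flag: "\<forall>i\<le>n. subspace_dim (2*n+1) (Wf i) i"
    and chain: "\<forall>i<n. Wf i \<subset> Wf (Suc i)"
    and iso: "totally_isotropic (2*n+1) q (Wf n)"
    and va: "v a \<in> {0, 1}"
begin

definition spk :: "nat \<Rightarrow> (nat \<Rightarrow> 'a vec) \<Rightarrow> 'a vec set" where
  "spk K B = {lc K c B | c. True}"

lemma subsp: "i \<le> n \<Longrightarrow> is_subspace N (Wf i)"
  using flag unfolding subspace_dim_def N_def by blast

lemma Wf_carrier: "i \<le> n \<Longrightarrow> Wf i \<subseteq> carrier_vec N"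
  using subsp unfolding is_subspace_def by blast

lemma sub_add: "is_subspace N S \<Longrightarrow> x \<in> S \<Longrightarrow> y \<in> S \<Longrightarrow> x + y \<in> S"
  unfolding is_subspace_def by blast
lemma sub_smult: "is_subspace N S \<Longrightarrow> x \<in> S \<Longrightarrow> c \<cdot>\<^sub>v x \<in> S"
  unfolding is_subspace_def by blast
lemma sub_zero: "is_subspace N S \<Longrightarrow> 0\<^sub>v N \<in> S"
  unfolding is_subspace_def by blast

lemma sub_lc: assumes S: "is_subspace N S"
  shows "(\<And>j. j < K \<Longrightarrow> C j \<in> S) \<Longrightarrow> lc K c C \<in> S"
proof (induction K)
  case 0 then show ?case using sub_zero[OF S] by (simp add: lc_0)
next
  case (Suc K)
  have CK: "C K \<in> carrier_vec N" using Suc.prems[of K] S unfolding is_subspace_def by auto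
  have "lc K c C \<in> S" using Suc by simp
  moreover have "c K \<cdot>\<^sub>v C K \<in> S" using Suc.prems[of K] sub_smult[OF S] by simp
  ultimately show ?case using lc_Suc[of C K c, OF CK] sub_add[OF S] by simp
qed

lemma Wf_mono: assumes "i \<le> j" "j \<le> n" shows "Wf i \<subseteq> Wf j"
  using assms
proof (induction j)
  case 0 then show ?case by simp
next
  case (Suc j)
  show ?case
  proof (cases "i = Suc j")
    case True then show ?thesis by simp
  next
    case False
    then have "Wf i \<subseteq> Wf j" using Suc by simp
    also have "Wf j \<subseteq> Wf (Suc j)"
    proof -
      have "j < n" using Suc.prems by simp
      then show ?thesis using chain by blast
    qed
    finally show ?thesis .
  qed
qed

lemma iso_q: "x \<in> Wf n \<Longrightarrow> q x = 0"
  using iso unfolding totally_isotropic_def by blast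

lemma iso_bil: assumes x: "x \<in> Wf n" and y: "y \<in> Wf n" shows "bil q x y = 0"
proof -
  have s: "is_subspace N (Wf n)" by (rule subsp) simp
  have "x + y \<in> Wf n" by (rule sub_add[OF s x y])
  then show ?thesis unfolding bil_def using iso_q x y by simp
qed

definition sw :: "nat \<Rightarrow> nat \<Rightarrow> nat \<Rightarrow> nat" where
  "sw s1 t1 i = (if i = s1 then t1 else if i = t1 then s1 else i)"

lemma sw_sw: "sw s1 t1 (sw s1 t1 i) = i" unfolding sw_def by auto
lemma sw_comm: "sw s1 t1 = sw t1 s1" unfolding sw_def by (rule ext) auto
lemma sw_id: "sw s1 s1 i = i" unfolding sw_def by auto
lemma sw_less: "s1 < M \<Longrightarrow> t1 < M \<Longrightarrow> i < M \<Longrightarrow> sw s1 t1 i < (M::nat)" unfolding sw_def by auto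
lemma sw_out: "i \<noteq> s1 \<Longrightarrow> i \<noteq> t1 \<Longrightarrow> sw s1 t1 i = i" unfolding sw_def by auto
lemma sw_refl: assumes "i \<le> M" "s1 \<le> M" "t1 \<le> (M::nat)" shows "M - sw s1 t1 i = sw (M - s1) (M - t1) (M - i)"
proof -
  have "M - i = M - s1 \<longleftrightarrow> i = s1" "M - i = M - t1 \<longleftrightarrow> i = t1" using assms by auto
  then show ?thesis unfolding sw_def by auto
qed
lemma sw_disj: "s1 \<noteq> s2 \<Longrightarrow> s1 \<noteq> t2 \<Longrightarrow> t1 \<noteq> s2 \<Longrightarrow> t1 \<noteq> t2 \<Longrightarrow> sw s1 t1 (sw s2 t2 i) = sw s2 t2 (sw s1 t1 i)"
  unfolding sw_def by auto

definition tau :: "nat \<Rightarrow> nat \<Rightarrow> nat \<Rightarrow> nat" where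
  "tau k p i = (if p = 2*n - k then sw k (2*n - k) i else sw k p (sw (2*n - k) (2*n - p) i))"

lemma tau_props: assumes k: "k < n" and p: "k \<le> p" "p \<le> 2*n - k" "p \<noteq> n"
  shows "invol (tau k p)" "tau k p k = p" "\<And>i. i < k \<or> 2*n - k < i \<Longrightarrow> tau k p i = i"
proof -
  have kN: "k < N" "2*n - k < N" "p < N" "2*n - p < N" using assms unfolding N_def by auto
  have kk: "2*n - (2*n - k) = k" "2*n - (2*n - p) = p" using assms by auto
  show "invol (tau k p)" unfolding invol_def
  proof (intro allI impI conjI)
    fix i assume i: "i < N"
    have i': "2*n - i < N" "i \<le> 2*n" using i unfolding N_def by auto
    show "tau k p i < N" unfolding tau_def using sw_less kN i by auto
    show "tau k p (tau k p i) = i"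
    proof (cases "p = 2*n - k")
      case True then show ?thesis unfolding tau_def by (simp add: sw_sw)
    next
      case False
      show ?thesis
      proof (cases "p = k")
        case True then show ?thesis unfolding tau_def using False by (simp add: sw_id)
      next
        case pk: False
        have d: "k \<noteq> 2*n - k" "k \<noteq> 2*n - p" "p \<noteq> 2*n - k" "p \<noteq> 2*n - p"
          using assms False by auto
        have "tau k p (tau k p i) = sw k p (sw (2*n - k) (2*n - p) (sw k p (sw (2*n - k) (2*n - p) i)))"
          unfolding tau_def using False by simp
        also have "sw (2*n - k) (2*n - p) (sw k p (sw (2*n - k) (2*n - p) i)) =
                   sw k p (sw (2*n - k) (2*n - p) (sw (2*n - k) (2*n - p) i))"
          by (rule sw_disj[symmetric]) (use d in auto)
        finally show ?thesis by (simp add: sw_sw)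
      qed
    qed
    show "tau k p (2*n - i) = 2*n - tau k p i"
    proof (cases "p = 2*n - k")
      case True
      have "2*n - sw k (2*n - k) i = sw (2*n - k) (2*n - (2*n - k)) (2*n - i)"
        by (rule sw_refl) (use i' assms in auto)
      then show ?thesis unfolding tau_def using True kk sw_comm by metis
    next
      case False
      show ?thesis
      proof (cases "p = k")
        case True then show ?thesis unfolding tau_def using False by (simp add: sw_id)
      next
        case pk: False
        have d: "k \<noteq> 2*n - k" "k \<noteq> 2*n - p" "p \<noteq> 2*n - k" "p \<noteq> 2*n - p"
          using assms False by auto
        have s2le: "sw (2*n - k) (2*n - p) i \<le> 2*n" using sw_less[of "2*n-k" N "2*n-p" i] kN i unfolding N_def by auto
        have "2*n - tau k p i = 2*n - sw k p (sw (2*n - k) (2*n - p) i)" unfolding tau_def using False by simp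
        also have "\<dots> = sw (2*n - k) (2*n - p) (2*n - sw (2*n - k) (2*n - p) i)"
          by (rule sw_refl) (use s2le assms in auto)
        also have "2*n - sw (2*n - k) (2*n - p) i = sw k p (2*n - i)"
          using sw_refl[of i "2*n" "2*n - k" "2*n - p"] i' kk by simp
        also have "sw (2*n - k) (2*n - p) (sw k p (2*n - i)) = sw k p (sw (2*n - k) (2*n - p) (2*n - i))"
          by (rule sw_disj[symmetric]) (use d in auto)
        also have "\<dots> = tau k p (2*n - i)" unfolding tau_def using False by simp
        finally show ?thesis by simp
      qed
    qed
  qed
  show "tau k p k = p" unfolding tau_def sw_def using assms by auto
  show "\<And>i. i < k \<or> 2*n - k < i \<Longrightarrow> tau k p i = i"
  proof -
    fix i assume "i < k \<or> 2*n - k < i"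
    then have "i \<noteq> k" "i \<noteq> p" "i \<noteq> 2*n - k" "i \<noteq> 2*n - p" using assms by auto
    then show "tau k p i = i" unfolding tau_def by (simp add: sw_out)
  qed
qed

end


context flagsetup begin

lemma lc_zero_all: "lc K (\<lambda>_. 0) B = 0\<^sub>v N"
  by (rule eq_vecI) (auto simp: lc_index)

lemma step:
  assumes g: "good B" and k: "k < n" and Wk: "\<forall>i\<le>k. Wf i = spk i B"
  shows "\<exists>B'. good B' \<and> Lat Ov B' = Lat Ov B \<and> (\<forall>i\<le>Suc k. Wf i = spk i B')"
proof -
  have gr: "gram B" using g unfolding good_def by simp
  have Bc: "\<And>i. i < N \<Longrightarrow> B i \<in> carrier_vec N" using gramD(1)[OF gr] .
  have kN: "k < N" "Suc k \<le> N" "k \<le> N" using k unfolding N_def by auto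
  have Sk: "is_subspace N (Wf (Suc k))" using subsp k by simp
  have SkW: "Wf k \<subseteq> Wf (Suc k)" "Wf (Suc k) \<subseteq> Wf n" "Wf k \<subseteq> Wf n"
    using Wf_mono k by auto
  obtain w where w: "w \<in> Wf (Suc k)" "w \<notin> Wf k" using chain k by blast
  have wcar: "w \<in> carrier_vec N" using w(1) Wf_carrier[of "Suc k"] k by auto
  obtain c where wc: "w = lc N c B"
    using g wcar unfolding good_def Lat_def by auto
  have spkW: "spk k B = Wf k" using Wk by simp
  have BkW: "\<And>j. j < k \<Longrightarrow> B j \<in> Wf k"
  proof -
    fix j assume j: "j < k"
    have "lc k (\<lambda>i. if i = j then 1 else 0) B = 1 \<cdot>\<^sub>v B j"
      by (rule lc_single[of j k B]) (use j kN Bc in auto)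
    then have "B j = lc k (\<lambda>i. if i = j then 1 else 0) B" using Bc[of j] j kN by simp
    then have "B j \<in> spk k B" unfolding spk_def by blast
    then show "B j \<in> Wf k" using spkW by simp
  qed
  have c0: "\<And>j. j < k \<Longrightarrow> c (2*n - j) = 0"
  proof -
    fix j assume j: "j < k"
    have jN: "j < N" using j kN by simp
    have "bil q w (B j) = 0" using iso_bil w BkW[OF j] SkW by auto
    then have "c (2*n - j) * gv j = 0" using coord[OF gr jN, of c] wc by simp
    then show "c (2*n - j) = 0" using gv_nz by simp
  qed
  define c' where "c' i = (if i < k then 0 else c i)" for i
  have split: "w = lc N c' B + lc k c B"
  proof -
    have "lc k c B = lc N (\<lambda>i. if i < k then c i else 0) B" by (rule lc_ext[OF kN(3)])
    then have "lc N c' B + lc k c B = lc N (\<lambda>i. c' i + (if i < k then c i else 0)) B"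
      by (simp add: lc_add)
    also have "\<dots> = lc N c B" by (rule lc_cong) (auto simp: c'_def)
    finally show ?thesis using wc by simp
  qed
  have lkW: "lc k c B \<in> Wf k" using spkW unfolding spk_def by auto
  have w'eq: "lc N c' B = w + (-1) \<cdot>\<^sub>v lc k c B"
    by (rule eq_vecI) (use split in auto)
  have w'W: "lc N c' B \<in> Wf (Suc k)"
    using w'eq sub_add[OF Sk w(1) sub_smult[OF Sk, of "lc k c B" "-1"]] lkW SkW by auto
  have nz: "\<exists>i<N. c' i \<noteq> 0"
  proof (rule ccontr)
    assume "\<not> (\<exists>i<N. c' i \<noteq> 0)"
    then have "lc N c' B = lc N (\<lambda>_. 0) B" by (intro lc_cong) auto
    then have "w = lc k c B" using split lc_zero_all by simp
    then show False using w lkW by simp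
  qed
  define S where "S = (\<lambda>i. v (c' i)) ` {i. i < N \<and> c' i \<noteq> 0}"
  have Sfin: "finite S" "S \<noteq> {}" unfolding S_def using nz by auto
  obtain m where m: "m < N" "c' m \<noteq> 0" "v (c' m) = Min S"
    using Min_in[OF Sfin] unfolding S_def by auto
  have mmin: "\<And>i. i < N \<Longrightarrow> c' i \<noteq> 0 \<Longrightarrow> v (c' m) \<le> v (c' i)"
    using m(3) Sfin unfolding S_def by auto
  define d where "d i = c' i / c' m" for i
  have dO: "\<forall>i<N. d i \<in> Ov" unfolding d_def using Odiv_le m(2) mmin by auto
  have dm: "d m = 1" unfolding d_def using m by simp
  have dz: "\<forall>i<N. (i < k \<or> 2*n - k < i) \<longrightarrow> d i = 0"
  proof (intro allI impI)
    fix i assume i: "i < N" and r: "i < k \<or> 2*n - k < i"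
    show "d i = 0"
    proof (cases "i < k")
      case True then show ?thesis unfolding d_def c'_def by simp
    next
      case False
      then have "2*n - i < k" "2*n - (2*n - i) = i" using r i k unfolding N_def by auto
      then have "c i = 0" using c0[of "2*n - i"] by simp
      then show ?thesis unfolding d_def c'_def by simp
    qed
  qed
  have ueq: "lc N d B = (1 / c' m) \<cdot>\<^sub>v lc N c' B"
    unfolding lc_smult d_def by (rule lc_cong) auto
  have uW: "lc N d B \<in> Wf (Suc k)" using ueq sub_smult[OF Sk w'W] by simp
  have qu: "q (lc N d B) = 0" using iso_q uW SkW by auto
  have nN: "n < N" unfolding N_def by simp
  obtain p where p: "p < N" "p \<noteq> n" "d p \<noteq> 0" "v (d p) = 0"
  proof (cases "m = n")
    case False
    then show ?thesis using that[of m] m dm v1 by simp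
  next
    case True
    show ?thesis
    proof (rule ccontr)
      assume H: "\<not> ?thesis"
      have Hp: "\<And>p. p < N \<Longrightarrow> p \<noteq> n \<Longrightarrow> d p \<in> val_ideal v"
      proof -
        fix p assume p: "p < N" "p \<noteq> n"
        have "d p = 0 \<or> v (d p) \<ge> 0" using dO p unfolding val_ring_def by auto
        moreover have "\<not> (d p \<noteq> 0 \<and> v (d p) = 0)" using H that p by blast
        ultimately show "d p \<in> val_ideal v" unfolding val_ideal_def by auto
      qed
      have "q (lc N d B) = (\<Sum>i<n. d i * d (2*n - i)) + a * (d n)^2" by (rule q_lc[OF gr])
      then have "(\<Sum>i<n. d i * d (2*n - i)) + a = 0" using qu dm True by simp
      then have aeq: "a = - (\<Sum>i<n. d i * d (2*n - i))" by (simp add: eq_neg_iff_add_eq_0 add.commute)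
      have "(\<Sum>i<n. d i * d (2*n - i)) \<in> P2"
      proof (rule P2sum)
        fix i assume "i \<in> {..<n}"
        then have i: "i < n" by simp
        have "i < N" "i \<noteq> n" "2*n - i < N" "2*n - i \<noteq> n" using i unfolding N_def by auto
        then show "d i * d (2*n - i) \<in> P2" using Hp P2mult by blast
      qed
      then have "a \<in> P2" using aeq P2neg by simp
      then show False using a_nz va unfolding P2_def by auto
    qed
  qed
  have pk1: "k \<le> p"
  proof (rule ccontr)
    assume "\<not> k \<le> p" then have "p < k" by simp
    then show False using dz p by auto
  qed
  have pk2: "p \<le> 2*n - k"
  proof (rule ccontr)
    assume "\<not> p \<le> 2*n - k" then have "2*n - k < p" by simp
    then show False using dz p by auto
  qed
  note pk = pk1 pk2
  define \<tau> where "\<tau> = tau k p"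
  have t: "invol \<tau>" "\<tau> k = p" "\<And>i. i < k \<or> 2*n - k < i \<Longrightarrow> \<tau> i = i"
    unfolding \<tau>_def using tau_props[OF k pk p(2)] by auto
  define B1 where "B1 i = B (\<tau> i)" for i
  define d1 where "d1 i = d (\<tau> i)" for i
  have g1: "good B1" unfolding B1_def by (rule good_reindex[OF t(1) g])
  have L1: "Lat Ov B1 = Lat Ov B" unfolding B1_def by (rule Lat_reindex[OF t(1) subr_O])
  have u1: "lc N d B = lc N d1 B1" unfolding B1_def d1_def by (rule lc_reindex[OF t(1)])
  have tN: "\<And>i. i < N \<Longrightarrow> \<tau> i < N" using t(1) unfolding invol_def by auto
  have d1O: "\<forall>i<N. d1 i \<in> Ov" unfolding d1_def using dO tN by auto
  have d1z: "\<forall>i<N. (i < k \<or> 2*n - k < i) \<longrightarrow> d1 i = 0" unfolding d1_def using dz t(3) by auto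
  have d1k: "d1 k \<noteq> 0" "v (d1 k) = 0" unfolding d1_def using t(2) p by auto
  obtain B' where B': "good B'" "Lat Ov B' = Lat Ov B1" "\<forall>i<k. B' i = B1 i" "B' k = lc N d1 B1"
    using eichler[OF g1 k d1O d1z _ d1k] qu u1 by auto
  have B'lo: "\<And>i. i < k \<Longrightarrow> B' i = B i" using B'(3) t(3) unfolding B1_def by auto
  have B'k: "B' k = lc N d B" using B'(4) u1 by simp
  have gr': "gram B'" using B'(1) unfolding good_def by simp
  have B'c: "\<And>i. i < N \<Longrightarrow> B' i \<in> carrier_vec N" using gramD(1)[OF gr'] .
  have spk_eq: "\<And>i. i \<le> k \<Longrightarrow> spk i B' = spk i B"
    unfolding spk_def using B'lo by (auto intro!: lc_cong)
  have final: "Wf (Suc k) = spk (Suc k) B'"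
  proof (intro equalityI subsetI)
    fix y assume y: "y \<in> spk (Suc k) B'"
    then obtain e where e: "y = lc (Suc k) e B'" unfolding spk_def by auto
    have "y = lc k e B' + e k \<cdot>\<^sub>v B' k" using e lc_Suc[of B' k e] B'c kN by simp
    moreover have "lc k e B' = lc k e B" by (rule lc_cong) (use B'lo in auto)
    moreover have "lc k e B \<in> Wf (Suc k)" using SkW Wk unfolding spk_def by auto
    moreover have "e k \<cdot>\<^sub>v B' k \<in> Wf (Suc k)" using B'k uW sub_smult[OF Sk] by simp
    ultimately show "y \<in> Wf (Suc k)" using sub_add[OF Sk] by simp
  next
    fix y assume y: "y \<in> Wf (Suc k)"
    have "Suc k \<le> n" using k by simp
    then have "subspace_dim N (Wf (Suc k)) (Suc k)" using flag unfolding N_def by blast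
    then obtain bs where bs: "length bs = Suc k" "Wf (Suc k) = fspan N bs"
      unfolding subspace_dim_def by blast
    define z where "z j = (if j = Suc k then y else B' j)" for j
    have zin: "\<forall>j<Suc k + 1. z j \<in> fspan N bs"
    proof (intro allI impI)
      fix j assume j: "j < Suc k + 1"
      have "z j \<in> Wf (Suc k)"
      proof (cases "j = Suc k")
        case True then show ?thesis using y unfolding z_def by simp
      next
        case False
        then have "j < k \<or> j = k" using j by auto
        then show ?thesis
        proof
          assume "j < k" then show ?thesis unfolding z_def using B'lo BkW SkW False by auto
        next
          assume "j = k" then show ?thesis unfolding z_def using B'k uW by simp
        qed
      qed
      then show "z j \<in> fspan N bs" using bs by simp
    qed
    obtain e where e: "\<exists>j<Suc k + 1. e j \<noteq> 0" "lc (Suc k + 1) e z = 0\<^sub>v N"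
      using dep[OF bs(1) zin] by blast
    have zlc: "lc (Suc k) e z = lc (Suc k) e B'" by (rule lc_cong) (auto simp: z_def)
    have ycar: "y \<in> carrier_vec N" using y Wf_carrier[of "Suc k"] k by auto
    have eq0: "lc (Suc k) e B' + e (Suc k) \<cdot>\<^sub>v y = 0\<^sub>v N"
      using e(2) lc_Suc[of z "Suc k" e] ycar zlc unfolding z_def by simp
    have es: "e (Suc k) \<noteq> 0"
    proof
      assume es0: "e (Suc k) = 0"
      have z0: "(0::'a) \<cdot>\<^sub>v y = 0\<^sub>v N" using ycar by (intro eq_vecI) auto
      have "lc (Suc k) e B' = 0\<^sub>v N" using eq0 es0 z0 by simp
      then have "lc N (\<lambda>i. if i < Suc k then e i else 0) B' = 0\<^sub>v N" using lc_ext[OF kN(2)] by simp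
      then have ez: "\<And>i. i < Suc k \<Longrightarrow> e i = 0"
      proof -
        fix i assume i: "i < Suc k"
        then have iN: "i < N" using kN by simp
        have "(if i < Suc k then e i else 0) = 0"
          by (rule lc_zero_coeff[OF gr' \<open>lc N (\<lambda>i. if i < Suc k then e i else 0) B' = 0\<^sub>v N\<close> iN])
        then show "e i = 0" using i by simp
      qed
      obtain j where j: "j < Suc k + 1" "e j \<noteq> 0" using e(1) by blast
      show False
      proof (cases "j = Suc k")
        case True then show False using j es0 by simp
      next
        case False then have "j < Suc k" using j by simp
        then show False using ez j by simp
      qed
    qed
    have "y = lc (Suc k) (\<lambda>i. (- 1 / e (Suc k)) * e i) B'"
    proof (rule eq_vecI)
      fix r assume r: "r < dim_vec (lc (Suc k) (\<lambda>i. - 1 / e (Suc k) * e i) B')"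
      then have rN: "r < N" by simp
      have "(lc (Suc k) e B' + e (Suc k) \<cdot>\<^sub>v y) $ r = 0" using eq0 rN by simp
      then have "lc (Suc k) e B' $ r + e (Suc k) * y $ r = 0" using rN ycar by simp
      then have "e (Suc k) * y $ r + lc (Suc k) e B' $ r = 0" by (simp add: add.commute)
      then have h: "y $ r * e (Suc k) = - lc (Suc k) e B' $ r" by (simp add: eq_neg_iff_add_eq_0 mult.commute)
      then have "y $ r = (- 1 / e (Suc k)) * lc (Suc k) e B' $ r" using es by (simp add: field_simps)
      also have "\<dots> = lc (Suc k) (\<lambda>i. (- 1 / e (Suc k)) * e i) B' $ r"
        unfolding lc_smult[symmetric] using rN by simp
      finally show "y $ r = lc (Suc k) (\<lambda>i. - 1 / e (Suc k) * e i) B' $ r" .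
    qed (use ycar in simp)
    then show "y \<in> spk (Suc k) B'" unfolding spk_def by blast
  qed
  have "\<forall>i\<le>Suc k. Wf i = spk i B'"
  proof (intro allI impI)
    fix i assume "i \<le> Suc k"
    then have "i \<le> k \<or> i = Suc k" by auto
    then show "Wf i = spk i B'" using spk_eq Wk final by auto
  qed
  then show ?thesis using B'(1,2) L1 by auto
qed

end


context qsetup begin

lemma bs_nth: assumes i: "i < N"
  shows "(map e [0..<n] @ [v0] @ rev (map f [0..<n])) ! i =
    (if i < n then e i else if i = n then v0 else f (2*n - i))"
proof -
  consider "i < n" | "i = n" | "n < i" by linarith
  then show ?thesis
  proof cases
    case 1 then show ?thesis by (simp add: nth_append)
  next
    case 2 then show ?thesis by (simp add: nth_append)
  next
    case 3
    have j: "i - n - 1 < n" using i 3 unfolding N_def by auto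
    have "(map e [0..<n] @ [v0] @ rev (map f [0..<n])) ! i = rev (map f [0..<n]) ! (i - n - 1)"
      using 3 by (simp add: nth_append)
    also have "\<dots> = f (n - 1 - (i - n - 1))" using j by (simp add: rev_nth)
    also have "n - 1 - (i - n - 1) = 2*n - i" using 3 i j unfolding N_def by auto
    finally show ?thesis using 3 by simp
  qed
qed

lemma lattice_good: assumes L: "lattice_of_type v (2*n+1) q n a L"
  shows "\<exists>B. good B \<and> L = Lat Ov B"
proof -
  obtain e f v0 where ef: "\<forall>i<n. e i \<in> carrier_vec N \<and> f i \<in> carrier_vec N" "v0 \<in> carrier_vec N"
    and gr: "\<forall>i<n. \<forall>j<n. bil q (e i) (e j) = 0 \<and> bil q (f i) (f j) = 0 \<and>
                     bil q (e i) (f j) = (if i = j then 1 else 0)"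
    and gv0: "\<forall>i<n. bil q (e i) v0 = 0 \<and> bil q (f i) v0 = 0" and vv: "bil q v0 v0 = 2 * a"
    and rest: "lin_indep N (map e [0..<n] @ [v0] @ rev (map f [0..<n]))"
       "fspan N (map e [0..<n] @ [v0] @ rev (map f [0..<n])) = carrier_vec N"
       "L = rspan (val_ring v) N (map e [0..<n] @ [v0] @ rev (map f [0..<n]))"
    using L unfolding lattice_of_type_def N_def[symmetric] Let_def by blast
  define bs where "bs = map e [0..<n] @ [v0] @ rev (map f [0..<n])"
  define B where "B i = bs ! i" for i
  have len: "length bs = N" unfolding bs_def N_def by simp
  have Bi: "\<And>i. i < N \<Longrightarrow> B i = (if i < n then e i else if i = n then v0 else f (2*n - i))"
    unfolding B_def bs_def by (rule bs_nth)
  have Bc: "\<And>i. i < N \<Longrightarrow> B i \<in> carrier_vec N"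
  proof -
    fix i assume i: "i < N"
    have "2*n - i < n" if "\<not> i < n" "i \<noteq> n" using that i unfolding N_def by auto
    then show "B i \<in> carrier_vec N" using Bi[OF i] ef by auto
  qed
  have gram: "gram B"
    unfolding gram_def
  proof (intro conjI allI impI)
    fix i assume "i < N" then show "B i \<in> carrier_vec N" by (rule Bc)
  next
    fix i j assume i: "i < N" and j: "j < N"
    have iN: "i \<le> 2*n" and jN: "j \<le> 2*n" using i j unfolding N_def by auto
    have sym: "\<And>x y. x \<in> carrier_vec N \<Longrightarrow> y \<in> carrier_vec N \<Longrightarrow> bil q x y = bil q y x" by (rule bil_sym)
    consider "i < n" | "i = n" | "n < i" by linarith
    then show "bil q (B i) (B j) = (if i + j = 2*n then gv i else 0)"
    proof cases
      case 1
      consider "j < n" | "j = n" | "n < j" by linarith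
      then show ?thesis
      proof cases
        case 1 then show ?thesis using \<open>i < n\<close> Bi i j gr by (auto simp: gv_def)
      next
        case 2 then show ?thesis using \<open>i < n\<close> Bi i j gv0 by (auto simp: gv_def)
      next
        case 3
        have "2*n - j < n" using 3 jN by auto
        moreover have "(i = 2*n - j) = (i + j = 2*n)" using jN by auto
        ultimately show ?thesis using \<open>i < n\<close> 3 Bi i j gr by (auto simp: gv_def)
      qed
    next
      case 2
      consider "j < n" | "j = n" | "n < j" by linarith
      then show ?thesis
      proof cases
        case 1 then show ?thesis using \<open>i = n\<close> Bi i j gv0 sym[of v0 "e j"] ef by (auto simp: gv_def)
      next
        case 2 then show ?thesis using \<open>i = n\<close> Bi i j vv by (auto simp: gv_def)
      next
        case 3
        have "2*n - j < n" using 3 jN by auto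
        then show ?thesis using \<open>i = n\<close> 3 Bi i j gv0 sym[of v0 "f (2*n - j)"] ef by (auto simp: gv_def)
      qed
    next
      case 3
      have fi: "2*n - i < n" using 3 iN by auto
      consider "j < n" | "j = n" | "n < j" by linarith
      then show ?thesis
      proof cases
        case 1
        have "(j = 2*n - i) = (i + j = 2*n)" using iN by auto
        then show ?thesis using \<open>n < i\<close> 1 fi Bi i j gr sym[of "f (2*n - i)" "e j"] ef by (auto simp: gv_def)
      next
        case 2 then show ?thesis using \<open>n < i\<close> fi Bi i j gv0 by (auto simp: gv_def)
      next
        case 3
        have "2*n - j < n" using 3 jN by auto
        then show ?thesis using \<open>n < i\<close> 3 fi Bi i j gr by (auto simp: gv_def)
      qed
    qed
  qed
  have LB: "\<And>R. {mat_of_cols N bs *\<^sub>v c | c. c \<in> carrier_vec (length bs) \<and> (\<forall>i < length bs. c $ i \<in> R)} = Lat R B"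
  proof (intro equalityI subsetI)
    fix R x assume "x \<in> {mat_of_cols N bs *\<^sub>v c | c. c \<in> carrier_vec (length bs) \<and> (\<forall>i < length bs. c $ i \<in> R)}"
    then obtain c where c: "x = mat_of_cols N bs *\<^sub>v c" "c \<in> carrier_vec N" "\<forall>i<N. c $ i \<in> R" using len by auto
    then have "x = lc N (\<lambda>i. c $ i) B" unfolding B_def using mat_of_cols_lc[OF len c(2)] by simp
    then show "x \<in> Lat R B" unfolding Lat_def using c by auto
  next
    fix R x assume "x \<in> Lat R B"
    then obtain c where c: "x = lc N c B" "\<forall>i<N. c i \<in> R" unfolding Lat_def by auto
    have "mat_of_cols N bs *\<^sub>v vec N c = lc N (\<lambda>i. vec N c $ i) B"
      unfolding B_def by (rule mat_of_cols_lc[OF len]) simp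
    also have "\<dots> = lc N c B" by (rule lc_cong) auto
    finally show "x \<in> {mat_of_cols N bs *\<^sub>v c | c. c \<in> carrier_vec (length bs) \<and> (\<forall>i < length bs. c $ i \<in> R)}"
      using c len by (intro CollectI exI[of _ "vec N c"]) auto
  qed
  have "Lat UNIV B = carrier_vec N"
    using rest(2) LB[of UNIV] unfolding bs_def[symmetric] fspan_def by simp
  then have "good B" using gram unfolding good_def by simp
  moreover have "L = Lat Ov B" using rest(3) LB[of Ov] unfolding bs_def[symmetric] rspan_def by simp
  ultimately show ?thesis by blast
qed

end


context qsetup begin

definition Pm :: "(nat \<Rightarrow> 'a vec) \<Rightarrow> 'a mat" where
  "Pm B = mat N N (\<lambda>(r, i). B i $ r)"

definition Sm :: "'a mat" where
  "Sm = mat N N (\<lambda>(r, s). bil q (unit_vec N r) (unit_vec N s))"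

definition Gm :: "'a mat" where
  "Gm = mat N N (\<lambda>(i, j). if i + j = 2*n then gv i else 0)"

lemma Pm_carrier[simp]: "Pm B \<in> carrier_mat N N" unfolding Pm_def by simp
lemma Sm_carrier[simp]: "Sm \<in> carrier_mat N N" unfolding Sm_def by simp
lemma Gm_carrier[simp]: "Gm \<in> carrier_mat N N" unfolding Gm_def by simp

lemma Pm_mult: assumes "c \<in> carrier_vec N" shows "Pm B *\<^sub>v c = lc N (\<lambda>i. c $ i) B"
  using assms by (intro eq_vecI) (auto simp: Pm_def lc_index scalar_prod_def atLeast0LessThan intro!: sum.cong)

lemma Pm_unit: assumes i: "i < N" and B: "B i \<in> carrier_vec N" shows "Pm B *\<^sub>v unit_vec N i = B i"
  using i B by (intro eq_vecI) (auto simp: Pm_def)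

lemma unit_expand: assumes x: "x \<in> carrier_vec N" shows "x = lc N (\<lambda>r. x $ r) (unit_vec N)"
proof (rule eq_vecI)
  fix s assume "s < dim_vec (lc N (\<lambda>r. x $ r) (unit_vec N))"
  then have s: "s < N" by simp
  have "(\<Sum>r<N. x $ r * unit_vec N r $ s) = (\<Sum>r<N. if r = s then x $ s else 0)"
    by (rule sum.cong) (use s in auto)
  also have "\<dots> = x $ s" using s by simp
  finally show "x $ s = lc N (\<lambda>r. x $ r) (unit_vec N) $ s" using s by (simp add: lc_index)
qed (use x in simp)

lemma bil_expand: assumes x: "x \<in> carrier_vec N" and y: "y \<in> carrier_vec N"
  shows "bil q x y = (\<Sum>r<N. x $ r * (\<Sum>s<N. Sm $$ (r, s) * y $ s))"
proof -
  have "bil q x y = bil q (lc N (\<lambda>r. x $ r) (unit_vec N)) (lc N (\<lambda>s. y $ s) (unit_vec N))"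
    using unit_expand[OF x] unit_expand[OF y] by simp
  also have "\<dots> = (\<Sum>r<N. x $ r * bil q (unit_vec N r) (lc N (\<lambda>s. y $ s) (unit_vec N)))"
    by (rule bil_lc_l) auto
  also have "\<dots> = (\<Sum>r<N. x $ r * (\<Sum>s<N. y $ s * bil q (unit_vec N r) (unit_vec N s)))"
    by (rule sum.cong) (auto simp: bil_lc_r)
  also have "\<dots> = (\<Sum>r<N. x $ r * (\<Sum>s<N. Sm $$ (r, s) * y $ s))"
    by (rule sum.cong[OF refl], rule arg_cong[where f = "\<lambda>z. _ * z"], rule sum.cong) (auto simp: Sm_def mult.commute)
  finally show ?thesis .
qed

lemma gram_matrix: assumes g: "gram B"
  shows "transpose_mat (Pm B) * (Sm * Pm B) = Gm"
proof (rule eq_matI)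
  fix i j assume "i < dim_row Gm" "j < dim_col Gm"
  then have i: "i < N" and j: "j < N" unfolding Gm_def by auto
  have Bc: "B i \<in> carrier_vec N" "B j \<in> carrier_vec N" using gramD(1)[OF g] i j by auto
  have "(transpose_mat (Pm B) * (Sm * Pm B)) $$ (i, j) = (\<Sum>r<N. B i $ r * (\<Sum>s<N. Sm $$ (r, s) * B j $ s))"
    using i j by (auto simp: Pm_def Sm_def scalar_prod_def atLeast0LessThan intro!: sum.cong)
  also have "\<dots> = bil q (B i) (B j)" using bil_expand[OF Bc] by simp
  also have "\<dots> = Gm $$ (i, j)" using gramD(2)[OF g i j] i j by (simp add: Gm_def)
  finally show "(transpose_mat (Pm B) * (Sm * Pm B)) $$ (i, j) = Gm $$ (i, j)" .
qed (auto simp: Gm_def Pm_def)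

lemma det_gram: assumes g: "gram B"
  shows "det (Pm B) ^ 2 * det Sm = det Gm"
proof -
  have "det Gm = det (transpose_mat (Pm B)) * (det Sm * det (Pm B))"
  proof -
    have c: "Sm * Pm B \<in> carrier_mat N N" using mult_carrier_mat[OF Sm_carrier Pm_carrier] .
    have "det Gm = det (transpose_mat (Pm B) * (Sm * Pm B))" using gram_matrix[OF g] by simp
    also have "\<dots> = det (transpose_mat (Pm B)) * det (Sm * Pm B)" by (rule det_mult) (use c in auto)
    also have "det (Sm * Pm B) = det Sm * det (Pm B)" by (rule det_mult[OF Sm_carrier Pm_carrier])
    finally show ?thesis .
  qed
  also have "det (transpose_mat (Pm B)) = det (Pm B)" by (rule det_transpose[OF Pm_carrier])
  finally show ?thesis by (simp add: power2_eq_square algebra_simps)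
qed

lemma det_Gm_nz: "det Gm \<noteq> 0"
proof
  assume "det Gm = 0"
  then obtain c where c: "c \<in> carrier_vec N" "c \<noteq> 0\<^sub>v N" "Gm *\<^sub>v c = 0\<^sub>v N"
    using det_0_iff_vec_prod_zero[OF Gm_carrier] by blast
  have "\<And>i. i < N \<Longrightarrow> c $ i = 0"
  proof -
    fix i assume i: "i < N"
    have j: "2*n - i < N" "2*n - (2*n - i) = i" using i by (auto simp: N_less)
    have "(Gm *\<^sub>v c) $ (2*n - i) = (\<Sum>l<N. (if 2*n - i + l = 2*n then gv (2*n - i) else 0) * c $ l)"
      using j c(1) by (auto simp: Gm_def scalar_prod_def atLeast0LessThan intro!: sum.cong)
    also have "\<dots> = (\<Sum>l<N. if l = i then gv (2*n - i) * c $ i else 0)"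
      by (rule sum.cong) (use i in \<open>auto simp: N_less\<close>)
    also have "\<dots> = gv (2*n - i) * c $ i" using i by simp
    finally have "gv (2*n - i) * c $ i = 0" using c(3) j by simp
    then show "c $ i = 0" using gv_nz by simp
  qed
  then have "c = 0\<^sub>v N" using c(1) by (intro eq_vecI) auto
  then show False using c(2) by simp
qed

lemma det_Pm_nz: assumes g: "gram B" shows "det (Pm B) \<noteq> 0"
proof
  assume "det (Pm B) = 0"
  then have "det Gm = 0" using det_gram[OF g] by simp
  then show False using det_Gm_nz by simp
qed

lemma det_Sm_nz: assumes g: "gram B" shows "det Sm \<noteq> 0"
  using det_gram[OF g] det_Gm_nz by auto

lemma smult_mat_vec: assumes "A \<in> carrier_mat N N" "x \<in> carrier_vec N"
  shows "(s \<cdot>\<^sub>m A) *\<^sub>v x = s \<cdot>\<^sub>v (A *\<^sub>v x)"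
  using assms by (intro eq_vecI) (auto simp: scalar_prod_def sum_distrib_left algebra_simps)

end


context flagsetup begin

lemma Wf0: "Wf 0 = {0\<^sub>v N}"
proof -
  have "subspace_dim N (Wf 0) 0" using flag unfolding N_def by blast
  then obtain bs where bs: "length bs = 0" "Wf 0 = fspan N bs" unfolding subspace_dim_def by blast
  then have bs0: "bs = []" by simp
  have h: "\<And>c. c \<in> carrier_vec 0 \<Longrightarrow> mat_of_cols N [] *\<^sub>v c = 0\<^sub>v N"
    by (intro eq_vecI) (auto simp: scalar_prod_def mat_of_cols_def)
  have v0: "vec 0 (\<lambda>_. 0::'a) \<in> carrier_vec (0::nat)" by (rule vec_carrier)
  have "mat_of_cols N [] *\<^sub>v vec 0 (\<lambda>_. 0::'a) = 0\<^sub>v N" by (rule h[OF v0])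
  then have "0\<^sub>v N = mat_of_cols N [] *\<^sub>v vec 0 (\<lambda>_. 0::'a) \<and> vec 0 (\<lambda>_. 0::'a) \<in> carrier_vec (0::nat)"
    by simp
  then have "(0\<^sub>v N :: 'a vec) \<in> fspan N []" unfolding fspan_def list.size(3) by blast
  moreover have "fspan N [] \<subseteq> {0\<^sub>v N :: 'a vec}" unfolding fspan_def using h by auto
  ultimately have "fspan N [] = {0\<^sub>v N :: 'a vec}" by auto
  then show ?thesis using bs bs0 by simp
qed

lemma spk0: "spk 0 B = {0\<^sub>v N}"
  unfolding spk_def by (auto simp: lc_0)

lemma adapted: assumes g: "good B"
  shows "k \<le> n \<Longrightarrow> \<exists>B'. good B' \<and> Lat Ov B' = Lat Ov B \<and> (\<forall>i\<le>k. Wf i = spk i B')"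
proof (induction k)
  case 0 then show ?case using g Wf0 spk0 by auto
next
  case (Suc k)
  then obtain B1 where B1: "good B1" "Lat Ov B1 = Lat Ov B" "\<forall>i\<le>k. Wf i = spk i B1" by auto
  have "k < n" using Suc.prems by simp
  then obtain B' where "good B'" "Lat Ov B' = Lat Ov B1" "\<forall>i\<le>Suc k. Wf i = spk i B'"
    using step[OF B1(1) _ B1(3)] by blast
  then show ?case using B1(2) by auto
qed

lemma main:
  assumes L1: "lattice_of_type v (2*n+1) q n a L1" and L2: "lattice_of_type v (2*n+1) q n a L2"
  shows "\<exists>G\<in>SO_group (2*n+1) q. (\<lambda>x. G *\<^sub>v x) ` L1 = L2 \<and>
           (\<forall>i\<in>{1..n}. (\<lambda>x. G *\<^sub>v x) ` Wf i = Wf i)"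
proof -
  obtain B1 where B1: "good B1" "L1 = Lat Ov B1" using lattice_good[OF L1] by blast
  obtain B2 where B2: "good B2" "L2 = Lat Ov B2" using lattice_good[OF L2] by blast
  obtain C1 where C1: "good C1" "Lat Ov C1 = L1" "\<forall>i\<le>n. Wf i = spk i C1"
    using adapted[OF B1(1), of n] B1(2) by auto
  obtain C2 where C2: "good C2" "Lat Ov C2 = L2" "\<forall>i\<le>n. Wf i = spk i C2"
    using adapted[OF B2(1), of n] B2(2) by auto
  have g1: "gram C1" and g2: "gram C2" using C1 C2 unfolding good_def by auto
  have C1c: "\<And>i. i < N \<Longrightarrow> C1 i \<in> carrier_vec N" using gramD(1)[OF g1] .
  have C2c: "\<And>i. i < N \<Longrightarrow> C2 i \<in> carrier_vec N" using gramD(1)[OF g2] .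
  define P1 where "P1 = Pm C1"
  define P2 where "P2 = Pm C2"
  have P1c: "P1 \<in> carrier_mat N N" and P2c: "P2 \<in> carrier_mat N N" unfolding P1_def P2_def by auto
  define d1 where "d1 = det P1"
  have d1nz: "d1 \<noteq> 0" unfolding d1_def P1_def by (rule det_Pm_nz[OF g1])
  define Pinv where "Pinv = (1 / d1) \<cdot>\<^sub>m adj_mat P1"
  have Pinvc: "Pinv \<in> carrier_mat N N" unfolding Pinv_def using adj_mat(1)[OF P1c] by simp
  have inv1: "Pinv * P1 = 1\<^sub>m N"
  proof -
    have "Pinv * P1 = (1 / d1) \<cdot>\<^sub>m (adj_mat P1 * P1)"
      unfolding Pinv_def by (rule mult_smult_assoc_mat[OF adj_mat(1)[OF P1c] P1c])
    also have "adj_mat P1 * P1 = d1 \<cdot>\<^sub>m 1\<^sub>m N" unfolding d1_def by (rule adj_mat(3)[OF P1c])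
    finally show ?thesis using d1nz by (intro eq_matI) auto
  qed
  have inv2: "P1 * Pinv = 1\<^sub>m N"
  proof -
    have "P1 * Pinv = (1 / d1) \<cdot>\<^sub>m (P1 * adj_mat P1)"
      unfolding Pinv_def by (rule mult_smult_distrib[OF P1c adj_mat(1)[OF P1c]])
    also have "P1 * adj_mat P1 = d1 \<cdot>\<^sub>m 1\<^sub>m N" unfolding d1_def by (rule adj_mat(2)[OF P1c])
    finally show ?thesis using d1nz by (intro eq_matI) auto
  qed
  have detinv: "d1 * det Pinv = 1"
    using det_mult[OF P1c Pinvc] inv2 unfolding d1_def by simp
  define G0 where "G0 = P2 * Pinv"
  have G0c: "G0 \<in> carrier_mat N N" unfolding G0_def using P2c Pinvc by simp
  have G0C: "\<And>i. i < N \<Longrightarrow> G0 *\<^sub>v C1 i = C2 i"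
  proof -
    fix i assume i: "i < N"
    have u: "unit_vec N i \<in> carrier_vec N" by simp
    have "G0 *\<^sub>v C1 i = G0 *\<^sub>v (P1 *\<^sub>v unit_vec N i)" unfolding P1_def using Pm_unit[of i C1, OF i C1c[OF i]] by simp
    also have "\<dots> = P2 *\<^sub>v (Pinv *\<^sub>v (P1 *\<^sub>v unit_vec N i))"
      unfolding G0_def using P2c Pinvc P1c u by simp
    also have "Pinv *\<^sub>v (P1 *\<^sub>v unit_vec N i) = (Pinv * P1) *\<^sub>v unit_vec N i"
      using P1c Pinvc u by simp
    also have "\<dots> = unit_vec N i" using inv1 u by simp
    also have "P2 *\<^sub>v unit_vec N i = C2 i" unfolding P2_def using Pm_unit[of i C2, OF i C2c[OF i]] .
    finally show "G0 *\<^sub>v C1 i = C2 i" .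
  qed
  have sq: "det P1 ^ 2 = det P2 ^ 2"
  proof -
    have "det P1 ^ 2 * det Sm = det P2 ^ 2 * det Sm"
      using det_gram[OF g1] det_gram[OF g2] unfolding P1_def P2_def by simp
    then show ?thesis using det_Sm_nz[OF g1] by simp
  qed
  define \<epsilon> where "\<epsilon> = det G0"
  have detG0: "det G0 = det P2 * det Pinv" unfolding G0_def by (rule det_mult[OF P2c Pinvc])
  have eps2: "\<epsilon> ^ 2 = 1"
  proof -
    have "\<epsilon> ^ 2 = det P2 ^ 2 * det Pinv ^ 2" unfolding \<epsilon>_def detG0 by (simp add: power_mult_distrib)
    also have "\<dots> = (d1 * det Pinv) ^ 2" using sq unfolding d1_def by (simp add: power_mult_distrib)
    finally show ?thesis using detinv by simp
  qed
  have eps: "\<epsilon> * \<epsilon> = 1" using eps2 by (simp add: power2_eq_square)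
  have epsO: "\<epsilon> \<in> Ov"
  proof -
    have "\<epsilon> = 1 \<or> \<epsilon> = -1" using eps2 by (simp add: power2_eq_1_iff)
    then show ?thesis using Oneg[OF O1] by auto
  qed
  define G where "G = \<epsilon> \<cdot>\<^sub>m G0"
  have Gc: "G \<in> carrier_mat N N" unfolding G_def using G0c by simp
  have detG: "det G = 1"
  proof -
    have "det G = \<epsilon> ^ N * \<epsilon>" unfolding G_def \<epsilon>_def using G0c by simp
    also have "\<epsilon> ^ N * \<epsilon> = \<epsilon> ^ (2 * (n + 1))" unfolding N_def by (simp add: power_Suc2[symmetric])
    also have "\<dots> = (\<epsilon> ^ 2) ^ (n + 1)" by (rule power_mult)
    finally show ?thesis using eps2 by simp
  qed
  have Glc: "\<And>K c. K \<le> N \<Longrightarrow> G *\<^sub>v lc K c C1 = lc K (\<lambda>i. \<epsilon> * c i) C2"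
  proof -
    fix K c assume K: "K \<le> N"
    have "G *\<^sub>v lc K c C1 = \<epsilon> \<cdot>\<^sub>v (G0 *\<^sub>v lc K c C1)" unfolding G_def by (rule smult_mat_vec[OF G0c]) simp
    also have "G0 *\<^sub>v lc K c C1 = lc K c (\<lambda>i. G0 *\<^sub>v C1 i)" by (rule mat_lc[OF G0c]) (use C1c K in auto)
    also have "\<dots> = lc K c C2" by (rule lc_cong) (use G0C K in auto)
    finally show "G *\<^sub>v lc K c C1 = lc K (\<lambda>i. \<epsilon> * c i) C2" by (simp add: lc_smult)
  qed
  have Ginv: "\<And>K c. K \<le> N \<Longrightarrow> lc K c C2 = G *\<^sub>v lc K (\<lambda>i. \<epsilon> * c i) C1"
  proof -
    fix K c assume K: "K \<le> N"
    have "G *\<^sub>v lc K (\<lambda>i. \<epsilon> * c i) C1 = lc K (\<lambda>i. \<epsilon> * (\<epsilon> * c i)) C2" by (rule Glc[OF K])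
    also have "\<dots> = lc K c C2" by (rule lc_cong) (auto simp: mult.assoc[symmetric] eps)
    finally show "lc K c C2 = G *\<^sub>v lc K (\<lambda>i. \<epsilon> * c i) C1" by simp
  qed
  have Gq: "\<forall>x\<in>carrier_vec N. q (G *\<^sub>v x) = q x"
  proof
    fix x :: "'a vec" assume x: "x \<in> carrier_vec N"
    then obtain c where c: "x = lc N c C1" using C1(1) unfolding good_def Lat_def by auto
    have "q (G *\<^sub>v x) = q (lc N (\<lambda>i. \<epsilon> * c i) C2)" using c Glc by simp
    also have "\<dots> = (\<Sum>i<n. (\<epsilon> * c i) * (\<epsilon> * c (2*n - i))) + a * (\<epsilon> * c n)^2" by (rule q_lc[OF g2])
    also have "\<dots> = (\<Sum>i<n. c i * c (2*n - i)) + a * (c n)^2"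
    proof -
      have "(\<Sum>i<n. (\<epsilon> * c i) * (\<epsilon> * c (2*n - i))) = (\<Sum>i<n. c i * c (2*n - i))"
      proof (rule sum.cong)
        fix i
        have "(\<epsilon> * c i) * (\<epsilon> * c (2*n - i)) = (\<epsilon> * \<epsilon>) * (c i * c (2*n - i))" by (simp only: ac_simps)
        then show "(\<epsilon> * c i) * (\<epsilon> * c (2*n - i)) = c i * c (2*n - i)" using eps by simp
      qed simp
      moreover have "(\<epsilon> * c n)^2 = (c n)^2" using eps2 by (simp add: power_mult_distrib)
      ultimately show ?thesis by simp
    qed
    also have "\<dots> = q x" using q_lc[OF g1, of c] c by simp
    finally show "q (G *\<^sub>v x) = q x" .
  qed
  have SO: "G \<in> SO_group (2*n+1) q"
    unfolding SO_group_def using Gc detG Gq unfolding N_def by simp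
  have imgL: "(\<lambda>x. G *\<^sub>v x) ` L1 = L2"
  proof (intro equalityI subsetI)
    fix y assume "y \<in> (\<lambda>x. G *\<^sub>v x) ` L1"
    then obtain c where c: "y = G *\<^sub>v lc N c C1" "\<forall>i<N. c i \<in> Ov" using C1(2) unfolding Lat_def by auto
    have "y = lc N (\<lambda>i. \<epsilon> * c i) C2" using c Glc by simp
    moreover have "\<forall>i<N. \<epsilon> * c i \<in> Ov" using c epsO Omult by auto
    ultimately show "y \<in> L2" using C2(2) unfolding Lat_def by blast
  next
    fix y assume "y \<in> L2"
    then obtain c where c: "y = lc N c C2" "\<forall>i<N. c i \<in> Ov" using C2(2) unfolding Lat_def by auto
    have "y = G *\<^sub>v lc N (\<lambda>i. \<epsilon> * c i) C1" using c Ginv by simp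
    moreover have "lc N (\<lambda>i. \<epsilon> * c i) C1 \<in> L1" using c epsO Omult C1(2) unfolding Lat_def by blast
    ultimately show "y \<in> (\<lambda>x. G *\<^sub>v x) ` L1" by blast
  qed
  have imgW: "\<forall>i\<in>{1..n}. (\<lambda>x. G *\<^sub>v x) ` Wf i = Wf i"
  proof
    fix i assume "i \<in> {1..n}"
    then have i: "i \<le> n" "i \<le> N" unfolding N_def by auto
    have W1: "Wf i = spk i C1" and W2: "Wf i = spk i C2" using C1(3) C2(3) i by auto
    show "(\<lambda>x. G *\<^sub>v x) ` Wf i = Wf i"
    proof (intro equalityI subsetI)
      fix y assume "y \<in> (\<lambda>x. G *\<^sub>v x) ` Wf i"
      then obtain c where "y = G *\<^sub>v lc i c C1" using W1 unfolding spk_def by auto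
      then have "y = lc i (\<lambda>j. \<epsilon> * c j) C2" using Glc i by simp
      then show "y \<in> Wf i" using W2 unfolding spk_def by blast
    next
      fix y assume "y \<in> Wf i"
      then obtain c where "y = lc i c C2" using W2 unfolding spk_def by auto
      then have "y = G *\<^sub>v lc i (\<lambda>j. \<epsilon> * c j) C1" using Ginv i by simp
      moreover have "lc i (\<lambda>j. \<epsilon> * c j) C1 \<in> Wf i" using W1 unfolding spk_def by blast
      ultimately show "y \<in> (\<lambda>x. G *\<^sub>v x) ` Wf i" by blast
    qed
  qed
  show ?thesis using SO imgL imgW by blast
qed

end

theorem proposition3p7p6:
  fixes v :: "'a::field_char_0 \<Rightarrow> int"
    and q :: "'a vec \<Rightarrow> 'a"
    and n :: nat and a :: 'a
    and L1 L2 W :: "'a vec set"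
    and Wf :: "nat \<Rightarrow> 'a vec set"
  assumes "nonarch_local_field v"
    and "quadratic_space (2*n+1) q"
    and "witt_index (2*n+1) q n"
    and "a \<in> val_ring v" and "a \<noteq> 0" and "v a \<in> {0, 1}"
    and "lattice_of_type v (2*n+1) q n a L1"
    and "lattice_of_type v (2*n+1) q n a L2"
    and "totally_isotropic (2*n+1) q W"
    and "\<forall>i\<le>n. subspace_dim (2*n+1) (Wf i) i"
    and "\<forall>i<n. Wf i \<subset> Wf (Suc i)"
    and "Wf n = W"
  shows "\<exists>G\<in>SO_group (2*n+1) q. (\<lambda>x. G *\<^sub>v x) ` L1 = L2 \<and>
           (\<forall>i\<in>{1..n}. (\<lambda>x. G *\<^sub>v x) ` Wf i = Wf i)"
proof -
  have dv: "discrete_valuation v" using assms(1) unfolding nonarch_local_field_def by blast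
  have qf: "quadratic_form (2*n+1) q" using assms(2) unfolding quadratic_space_def by blast
  interpret flagsetup v q n a Wf
    by unfold_locales (use dv qf assms in auto)
  show ?thesis by (rule main[OF assms(7) assms(8)])
qed


end
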